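(* Suppose that $f\in E^2$, $n\in\mathbb N$, $T>1$ and $M>1$. Then for any $0\le a<b\le1$ and $z\in\mathbb R^2$ such that $\|z-f(a)\|<1/n^2$, \[\mathbb Q\big(\xi^T|_{[a,b]}\in\Lambda_{M,T}(f,n)|_{[a,b]}\,\big|\,\xi^T(a)=z\big)\le\exp\Big(-T\sum_{j=\lfloor an\rfloor}^{\lceil bn\rceil-1}\big(\mathcal E^+_X(I_j\cap[a,b],\Lambda_{M,T}(f,n),T)+\mathcal E^+_Y(I_j\cap[a,b],\Lambda_{M,T}(f,n),T)\big)\Big).\]
   Context: Let $R(x,y)=\frac{x+1}{y+1}\vee\frac{y+1}{x+1}$, $P(x,y)=\frac{y+1}{2(x+1)}\mathbb 1_{x\ge y}+(1-\frac{x+1}{2(y+1)})\mathbb 1_{x<y}$, $R_X=RP$, $R_Y=R(1-P)$. Under $\mathbb Q$, $(\xi_t)_{t\ge0}$ is a Markov process in $\mathbb R^2$ with $\xi_0=0$ which, in state $z$, jumps at rate $2R(z)$, each jump being $(\mathbbm e,0)$ with probability $P(z)$ and $(0,\mathbbm e)$ otherwise, $\mathbbm e\sim$ Exp(1) independent. $\xi^T(s)=\xi(sT)/T$; conditioning on $\xi^T(a)=z$ means considering the process from time $aT$ onwards started at $Tz$. For $F\subset E^2$, $h\in F|_I$ iff some $g\in F$ agrees with $h$ on $I$. $\|\cdot\|$ max norm on $\mathbb R^2$. $I_j=[j/n,(j+1)/n]$. $E$: non-decreasing càdlàg $f:[0,1]\to\mathbb R$ with $f(0)=0$. $G_{M,T}=\{f\in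 E:s/M-2T^{-2/3}\le f(s)\le M(s+2T^{-2/3})\ \forall s\}$; $\rho(f,g)=\sup_s\|f(s)-g(s)\|$; $\Lambda_{M,T}(f,n)=B_\rho(f,1/n^2)\cap G_{M,T}^2$. For a non-empty interval $I\subset[0,1]$ with infimum $I^-$, supremum $I^+$, length $|I|$, $F\subset E^2$, $T\ge1$: $R^-_X(I,F,T)=\inf\{R_X(Tg(s)):s\in I,g\in F\}$, $R^+_X(I,F,T)$ the sup, similarly $R^\pm_Y$; $x^-(s,F)=\inf\{g_X(s):g\in F\}$, $x^+(s,F)=\sup\{g_X(s):g\in F\}$, similarly $y^\pm$. "$X-$ case": $2R^-_X|I|>x^+(I^+,F)-x^-(I^-,F)$; "$X+$ case": $x^-(I^+,F)-x^+(I^-,F)>2R^+_X|I|$. $\mathcal E^+_X(I,F,T)=(\sqrt{2R^-_X(I,F,T)|I|}-\sqrt{x^+(I^+,F)-x^-(I^-,F)})^2$ in the $X-$ case, $(\sqrt{2R^+_X(I,F,T)|I|}-\sqrt{x^-(I^+,F)-x^+(I^-,F)})^2$ in the $X+$ case, $0$ otherwise; $\mathcal E^+_Y$ analogously with $R^\pm_Y,y^\pm$. *)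

theory Defs
  imports "HOL-Probability.Probability"
begin

type_synonym pt = "real \<times> real"

definition RR :: "pt \<Rightarrow> real" where
  "RR z = max ((fst z + 1) / (snd z + 1)) ((snd z + 1) / (fst z + 1))"

definition PP :: "pt \<Rightarrow> real" where
  "PP z = (if fst z \<ge> snd z then (snd z + 1) / (2 * (fst z + 1))
           else 1 - (fst z + 1) / (2 * (snd z + 1)))"

definition RX :: "pt \<Rightarrow> real" where "RX z = RR z * PP z"
definition RY :: "pt \<Rightarrow> real" where "RY z = RR z * (1 - PP z)"

definition mnorm :: "pt \<Rightarrow> real" where "mnorm z = max \<bar>fst z\<bar> \<bar>snd z\<bar>"

text \<open>Driving randomness: an i.i.d. sequence of triples (U_k, V_k, W_k), U_k ~ Exp(1)
 (holding times), V_k ~ Uniform[0,1] (direction), W_k ~ Exp(1) (jump sizes).\<close>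

definition Dstep :: "(real \<times> real \<times> real) measure" where
  "Dstep = density lborel (exponential_density 1) \<Otimes>\<^sub>M
           (uniform_measure lborel {0..1} \<Otimes>\<^sub>M density lborel (exponential_density 1))"

definition QQ :: "(nat \<Rightarrow> real \<times> real \<times> real) measure" where
  "QQ = PiM UNIV (\<lambda>_. Dstep)"

fun chain :: "pt \<Rightarrow> (nat \<Rightarrow> real \<times> real \<times> real) \<Rightarrow> nat \<Rightarrow> pt" where
  "chain w \<omega> 0 = w"
| "chain w \<omega> (Suc k) =
     (let z = chain w \<omega> k; (U, V, W) = \<omega> k in
      if V < PP z then (fst z + W, snd z) else (fst z, snd z + W))"

text \<open>Jump times: in state z the holding time is Exp(2 R(z)).\<close>
fun jtime :: "pt \<Rightarrow> (nat \<Rightarrow> real \<times> real \<times> real) \<Rightarrow> nat \<Rightarrow> real" where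
  "jtime w \<omega> 0 = 0"
| "jtime w \<omega> (Suc k) = jtime w \<omega> k + fst (\<omega> k) / (2 * RR (chain w \<omega> k))"

text \<open>Number of jumps by time t (a state with non-positive rate is treated as absorbing).\<close>
definition njumps :: "pt \<Rightarrow> (nat \<Rightarrow> real \<times> real \<times> real) \<Rightarrow> real \<Rightarrow> nat" where
  "njumps w \<omega> t = (LEAST k. \<not> (RR (chain w \<omega> k) > 0 \<and> jtime w \<omega> (Suc k) \<le> t))"

definition xi :: "pt \<Rightarrow> (nat \<Rightarrow> real \<times> real \<times> real) \<Rightarrow> real \<Rightarrow> pt" where
  "xi w \<omega> t = chain w \<omega> (njumps w \<omega> t)"

type_synonym path2 = "(real \<Rightarrow> real) \<times> (real \<Rightarrow> real)"

definition at2 :: "path2 \<Rightarrow> real \<Rightarrow> pt" where "at2 g s = (fst g s, snd g s)"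

definition cadlag01 :: "(real \<Rightarrow> real) \<Rightarrow> bool" where
  "cadlag01 f \<longleftrightarrow> (\<forall>s\<in>{0..<1}. continuous (at_right s) f) \<and>
                   (\<forall>s\<in>{0<..1}. \<exists>l. (f \<longlongrightarrow> l) (at_left s))"

definition EE :: "(real \<Rightarrow> real) set" where
  "EE = {f. mono_on {0..1} f \<and> cadlag01 f \<and> f 0 = 0}"

definition GG :: "real \<Rightarrow> real \<Rightarrow> (real \<Rightarrow> real) set" where
  "GG M T = {f \<in> EE. \<forall>s\<in>{0..1}.
      s / M - 2 * T powr (-2/3) \<le> f s \<and> f s \<le> M * (s + 2 * T powr (-2/3))}"

definition rho :: "path2 \<Rightarrow> path2 \<Rightarrow> real" where
  "rho f g = (SUP s\<in>{0..1}. mnorm (at2 f s - at2 g s))"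

definition Lam :: "real \<Rightarrow> real \<Rightarrow> path2 \<Rightarrow> nat \<Rightarrow> path2 set" where
  "Lam M T f n = {g \<in> EE \<times> EE. rho f g < 1 / (real n)^2} \<inter> (GG M T \<times> GG M T)"

definition RXm :: "real set \<Rightarrow> path2 set \<Rightarrow> real \<Rightarrow> real" where
  "RXm I F T = Inf {RX (T *\<^sub>R at2 g s) | s g. s \<in> I \<and> g \<in> F}"
definition RXp :: "real set \<Rightarrow> path2 set \<Rightarrow> real \<Rightarrow> real" where
  "RXp I F T = Sup {RX (T *\<^sub>R at2 g s) | s g. s \<in> I \<and> g \<in> F}"
definition RYm :: "real set \<Rightarrow> path2 set \<Rightarrow> real \<Rightarrow> real" where
  "RYm I F T = Inf {RY (T *\<^sub>R at2 g s) | s g. s \<in> I \<and> g \<in> F}"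
definition RYp :: "real set \<Rightarrow> path2 set \<Rightarrow> real \<Rightarrow> real" where
  "RYp I F T = Sup {RY (T *\<^sub>R at2 g s) | s g. s \<in> I \<and> g \<in> F}"

definition xm :: "real \<Rightarrow> path2 set \<Rightarrow> real" where "xm s F = Inf {fst g s | g. g \<in> F}"
definition xp :: "real \<Rightarrow> path2 set \<Rightarrow> real" where "xp s F = Sup {fst g s | g. g \<in> F}"
definition ym :: "real \<Rightarrow> path2 set \<Rightarrow> real" where "ym s F = Inf {snd g s | g. g \<in> F}"
definition yp :: "real \<Rightarrow> path2 set \<Rightarrow> real" where "yp s F = Sup {snd g s | g. g \<in> F}"

text \<open>I^- = Inf I, I^+ = Sup I, |I| = Sup I - Inf I.\<close>
definition EXp :: "real set \<Rightarrow> path2 set \<Rightarrow> real \<Rightarrow> real" where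
  "EXp I F T =
    (let L = Sup I - Inf I in
     if 2 * RXm I F T * L > xp (Sup I) F - xm (Inf I) F
       then (sqrt (2 * RXm I F T * L) - sqrt (xp (Sup I) F - xm (Inf I) F))^2
     else if xm (Sup I) F - xp (Inf I) F > 2 * RXp I F T * L
       then (sqrt (2 * RXp I F T * L) - sqrt (xm (Sup I) F - xp (Inf I) F))^2
     else 0)"

definition EYp :: "real set \<Rightarrow> path2 set \<Rightarrow> real \<Rightarrow> real" where
  "EYp I F T =
    (let L = Sup I - Inf I in
     if 2 * RYm I F T * L > yp (Sup I) F - ym (Inf I) F
       then (sqrt (2 * RYm I F T * L) - sqrt (yp (Sup I) F - ym (Inf I) F))^2
     else if ym (Sup I) F - yp (Inf I) F > 2 * RYp I F T * L
       then (sqrt (2 * RYp I F T * L) - sqrt (ym (Sup I) F - yp (Inf I) F))^2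
     else 0)"

text \<open>Q(xi^T restricted to [a,b] in F restricted to [a,b] | xi^T(a) = z): the process is
  restarted at time aT from Tz, so xi^T(s) = xi_{Tz}((s-a)T)/T for s in [a,b].\<close>
definition cond_prob :: "real \<Rightarrow> real \<Rightarrow> real \<Rightarrow> pt \<Rightarrow> path2 set \<Rightarrow> real" where
  "cond_prob T a b z F = measure QQ
     {\<omega> \<in> space QQ. \<exists>g\<in>F. \<forall>s\<in>{a..b}.
         (1 / T) *\<^sub>R xi (T *\<^sub>R z) \<omega> ((s - a) * T) = at2 g s}"

end

theory Submission
  imports Defs
begin

abbreviation "B3 \<equiv> (borel :: real measure) \<Otimes>\<^sub>M ((borel :: real measure) \<Otimes>\<^sub>M (borel :: real measure))"
abbreviation "B2 \<equiv> (borel :: real measure) \<Otimes>\<^sub>M (borel :: real measure)"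

lemma sets_Dstep: "sets Dstep = sets B3"
  unfolding Dstep_def
  by (simp cong: sets_pair_measure_cong)


lemma space_Dstep: "space Dstep = UNIV"
  using sets_eq_imp_space_eq[OF sets_Dstep] by (simp add: space_pair_measure)

lemma prob_space_Dstep: "prob_space Dstep"
  unfolding Dstep_def
  by (intro prob_space_pair prob_space_exponential_density prob_space_uniform_measure) auto

lemma space_QQ: "space QQ = UNIV"
  unfolding QQ_def by (simp add: space_PiM space_Dstep)

lemma comp_meas[measurable]: "(\<lambda>\<omega>. \<omega> k) \<in> measurable QQ B3"
proof -
  have "(\<lambda>\<omega>. \<omega> k) \<in> measurable QQ Dstep"
    unfolding QQ_def by (rule measurable_component_singleton) simp
  thus ?thesis by (simp only: measurable_cong_sets[OF refl sets_Dstep])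
qed

lemma QQ_decomp:
  assumes f[measurable]: "f \<in> borel_measurable QQ"
  shows "(\<integral>\<^sup>+\<omega>. f \<omega> \<partial>QQ) = (\<integral>\<^sup>+x. (\<integral>\<^sup>+\<omega>. f (case_nat x \<omega>) \<partial>QQ) \<partial>Dstep)"
proof -
  interpret D: prob_space Dstep by (rule prob_space_Dstep)
  interpret S: sequence_space Dstep ..
  interpret P: pair_sigma_finite Dstep "\<Pi>\<^sub>M i::nat\<in>UNIV. Dstep" ..
  have fm: "f \<in> borel_measurable (\<Pi>\<^sub>M i::nat\<in>UNIV. Dstep)" using f unfolding QQ_def .
  have "(\<integral>\<^sup>+\<omega>. f \<omega> \<partial>QQ) = (\<integral>\<^sup>+X. f ((\<lambda>(s, \<omega>). case_nat s \<omega>) X) \<partial>(Dstep \<Otimes>\<^sub>M S.S))"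
    unfolding QQ_def using fm
    by (subst S.PiM_iter[symmetric]) (simp add: nn_integral_distr)
  also have "\<dots> = (\<integral>\<^sup>+x. \<integral>\<^sup>+X. f (case_nat x X) \<partial>S.S \<partial>Dstep)"
  proof -
    have m: "(\<lambda>X. f (case_nat (fst X) (snd X))) \<in> borel_measurable (Dstep \<Otimes>\<^sub>M S.S)"
      using fm by measurable
    show ?thesis using S.nn_integral_fst[OF m] by (simp add: split_beta)
  qed
  finally show ?thesis unfolding QQ_def by simp
qed

definition stepw :: "pt \<Rightarrow> real \<times> real \<times> real \<Rightarrow> pt" where
  "stepw z x = (if fst (snd x) < PP z then (fst z + snd (snd x), snd z) else (fst z, snd z + snd (snd x)))"

lemma chain_Suc': "chain w \<omega> (Suc k) = stepw (chain w \<omega> k) (\<omega> k)"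
  by (simp add: stepw_def Let_def split: prod.splits)

declare chain.simps(2)[simp del]

lemma chain_shift: "chain w \<omega> (Suc k) = chain (stepw w (\<omega> 0)) (\<lambda>i. \<omega> (Suc i)) k"
  by (induction k) (simp_all add: chain_Suc')

lemma jtime_shift: "jtime w \<omega> (Suc k) = fst (\<omega> 0) / (2 * RR w) + jtime (stepw w (\<omega> 0)) (\<lambda>i. \<omega> (Suc i)) k"
  by (induction k) (simp_all add: chain_shift)

lemma RR_meas[measurable]: "RR \<in> borel_measurable B2"
  unfolding RR_def by measurable
lemma PP_meas[measurable]: "PP \<in> borel_measurable B2"
  unfolding PP_def by measurable

lemma stepw_meas[measurable]: "(\<lambda>p. stepw (fst p) (snd p)) \<in> measurable (B2 \<Otimes>\<^sub>M B3) B2"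
  unfolding stepw_def by measurable

lemma chain_meas[measurable]: "(\<lambda>\<omega>. chain w \<omega> k) \<in> measurable QQ B2"
proof (induction k)
  case 0 thus ?case by (auto intro!: measurable_const simp: space_pair_measure)
next
  case (Suc k)
  have "(\<lambda>\<omega>. (chain w \<omega> k, \<omega> k)) \<in> measurable QQ (B2 \<Otimes>\<^sub>M B3)"
    using Suc by measurable
  from measurable_compose[OF this stepw_meas] show ?case by (simp add: chain_Suc')
qed

lemma jtime_meas[measurable]: "(\<lambda>\<omega>. jtime w \<omega> k) \<in> borel_measurable QQ"
  by (induction k) simp_all


abbreviation "E1 \<equiv> density lborel (exponential_density (1::real))"

lemma expd_int1: "l > 0 \<Longrightarrow> (\<integral>\<^sup>+x. ennreal (exponential_density l x) \<partial>lborel) = 1"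
proof -
  assume l: "l > 0"
  interpret prob_space "density lborel (exponential_density l)" by (rule prob_space_exponential_density[OF l])
  have "emeasure (density lborel (exponential_density l)) UNIV = 1"
    using emeasure_space_1 by simp
  thus ?thesis by (simp add: emeasure_density)
qed

lemma E1_exp:
  fixes a :: real assumes a: "a > -1"
  shows "(\<integral>\<^sup>+W. ennreal (exp (- (a * W))) \<partial>E1) = ennreal (1 / (1 + a))"
proof -
  have "(\<integral>\<^sup>+W. ennreal (exp (- (a * W))) \<partial>E1) = (\<integral>\<^sup>+W. ennreal (exponential_density 1 W) * ennreal (exp (- a * W)) \<partial>lborel)"
    by (subst nn_integral_density) auto
  also have "\<dots> = (\<integral>\<^sup>+W. ennreal (1 / (1 + a)) * ennreal (exponential_density (1 + a) W) \<partial>lborel)"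
  proof (rule nn_integral_cong)
    fix W :: real
    have "exponential_density 1 W * exp (- a * W) = 1 / (1 + a) * exponential_density (1 + a) W"
      using a by (auto simp: exponential_density_def field_simps mult_exp_exp algebra_simps)
    thus "ennreal (exponential_density 1 W) * ennreal (exp (- a * W)) = ennreal (1 / (1 + a)) * ennreal (exponential_density (1 + a) W)"
      using a by (simp add: ennreal_mult'[symmetric] exponential_density_nonneg)
  qed
  also have "\<dots> = ennreal (1 / (1 + a)) * (\<integral>\<^sup>+W. ennreal (exponential_density (1 + a) W) \<partial>lborel)"
    by (rule nn_integral_cmult) auto
  also have "\<dots> = ennreal (1 / (1 + a))" using expd_int1[of "1 + a"] a by simp
  finally show ?thesis .
qed

abbreviation "UN01 \<equiv> uniform_measure lborel {0..(1::real)}"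

lemma VW_int:
  fixes a b P :: real assumes a: "a > -1" and b: "b > -1" and P: "0 \<le> P" "P \<le> 1"
  shows "(\<integral>\<^sup>+y. ennreal (if fst y < P then exp (- a * snd y) else exp (- b * snd y)) \<partial>(UN01 \<Otimes>\<^sub>M E1))
       = ennreal (P / (1 + a) + (1 - P) / (1 + b))"
proof -
  interpret E: prob_space E1 by (rule prob_space_exponential_density) simp
  have "(\<integral>\<^sup>+y. ennreal (if fst y < P then exp (- a * snd y) else exp (- b * snd y)) \<partial>(UN01 \<Otimes>\<^sub>M E1))
     = (\<integral>\<^sup>+V. \<integral>\<^sup>+W. ennreal (if V < P then exp (- a * W) else exp (- b * W)) \<partial>E1 \<partial>UN01)"
    apply (subst E.nn_integral_fst[symmetric])
    apply simp
    apply (rule nn_integral_cong)+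
    apply simp
    done
  also have "\<dots> = (\<integral>\<^sup>+V. ennreal (if V < P then 1 / (1 + a) else 1 / (1 + b)) \<partial>UN01)"
    by (rule nn_integral_cong) (auto simp: E1_exp a b)
  also have "\<dots> = (\<integral>\<^sup>+V. ennreal (if V < P then 1 / (1 + a) else 1 / (1 + b)) * indicator {0..1} V \<partial>lborel)"
    by (subst nn_integral_uniform_measure) (auto simp: divide_ennreal_def)
  also have "\<dots> = (\<integral>\<^sup>+V. ennreal (1 / (1 + a)) * indicator {0..<P} V + ennreal (1 / (1 + b)) * indicator {P..1} V \<partial>lborel)"
    using P by (intro nn_integral_cong) (auto split: split_indicator)
  also have "\<dots> = ennreal (1 / (1 + a)) * P + ennreal (1 / (1 + b)) * (1 - P)"
    using P by (subst nn_integral_add) (auto simp: nn_integral_cmult_indicator)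
  also have "\<dots> = ennreal (P / (1 + a) + (1 - P) / (1 + b))"
    using P a b by (simp add: ennreal_mult'[symmetric] ennreal_plus[symmetric] del: ennreal_plus)
  finally show ?thesis .
qed


definition ilen :: "real \<Rightarrow> real \<Rightarrow> real \<Rightarrow> real \<Rightarrow> real" where
  "ilen t s p q = max 0 (min s q - max t p)"

definition nice :: "pt \<Rightarrow> bool" where "nice w \<longleftrightarrow> 0 \<le> fst w \<and> 0 \<le> snd w"

lemma ilen_deriv:
  assumes "s \<noteq> max t p" "s \<noteq> q"
  shows "((\<lambda>s. ilen t s p q) has_real_derivative (if max t p < s \<and> s < q then 1 else 0)) (at s)"
proof -
  define m where "m = max t p"
  have e: "ilen t s' p q = max 0 (min s' q - m)" for s' unfolding ilen_def m_def ..
  consider "s < m" | "m < s" "s < q" | "m < s" "q < s" using assms unfolding m_def by linarith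
  thus ?thesis
  proof cases
    case 1
    have v: "(if max t p < s \<and> s < q then 1 else 0) = (0::real)" using 1 m_def by auto
    have "((\<lambda>s. 0) has_real_derivative 0) (at s)" by simp
    thus ?thesis unfolding v
      by (rule has_field_derivative_transform_within_open[where S="{..<m}"]) (use 1 in \<open>auto simp: e m_def\<close>)
  next
    case 2
    have v: "(if max t p < s \<and> s < q then 1 else 0) = (1::real)" using 2 m_def by auto
    have "((\<lambda>s. s - m) has_real_derivative 1) (at s)" by (auto intro!: derivative_eq_intros)
    thus ?thesis unfolding v
      by (rule has_field_derivative_transform_within_open[where S="{m<..<q}"]) (use 2 in \<open>auto simp: e m_def\<close>)
  next
    case 3
    have v: "(if max t p < s \<and> s < q then 1 else 0) = (0::real)" using 3 m_def by auto
    have "((\<lambda>s. max 0 (q - m)) has_real_derivative 0) (at s)" by simp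
    thus ?thesis unfolding v
      by (rule has_field_derivative_transform_within_open[where S="{max m q<..}"]) (use 3 in \<open>auto simp: e m_def\<close>)
  qed
qed

lemma ilen_same[simp]: "ilen t t p q = 0"
  unfolding ilen_def by simp

lemma ilen_nonneg: "0 \<le> ilen t s p q" unfolding ilen_def by simp

lemma ilen_add: "u \<le> v \<Longrightarrow> v \<le> w \<Longrightarrow> ilen u v p q + ilen v w p q = ilen u w p q"
  unfolding ilen_def by (simp add: max_def min_def) 

lemma nice_RR: "nice w \<Longrightarrow> RR w \<ge> 1"
proof -
  assume "nice w"
  hence a: "fst w + 1 > 0" "snd w + 1 > 0" unfolding nice_def by auto
  show ?thesis
  proof (cases "fst w \<le> snd w")
    case True
    hence "(snd w + 1) / (fst w + 1) \<ge> 1" using a by simp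
    thus ?thesis unfolding RR_def by linarith
  next
    case False
    hence "(fst w + 1) / (snd w + 1) \<ge> 1" using a by simp
    thus ?thesis unfolding RR_def by linarith
  qed
qed

lemma nice_PP: "nice w \<Longrightarrow> 0 < PP w \<and> PP w < 1"
  unfolding nice_def PP_def by (auto simp: field_simps)

locale blk =
  fixes J :: "int set" and sb eb th ph :: "int \<Rightarrow> real" and H :: real
  assumes finJ: "finite J"
  and th_gt: "\<And>j. j \<in> J \<Longrightarrow> th j > -1"
  and ph_gt: "\<And>j. j \<in> J \<Longrightarrow> ph j > -1"
  and disj: "\<And>i j. i \<in> J \<Longrightarrow> j \<in> J \<Longrightarrow> i \<noteq> j \<Longrightarrow> eb i \<le> sb j \<or> eb j \<le> sb i"
begin

definition theta :: "real \<Rightarrow> real" where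
  "theta t = (\<Sum>j\<in>J. if sb j < t \<and> t \<le> eb j then th j else 0)"
definition phi :: "real \<Rightarrow> real" where
  "phi t = (\<Sum>j\<in>J. if sb j < t \<and> t \<le> eb j then ph j else 0)"
definition cj :: "int \<Rightarrow> pt \<Rightarrow> real" where
  "cj j w = 2 * RX w * th j / (1 + th j) + 2 * RY w * ph j / (1 + ph j)"
definition Cf :: "pt \<Rightarrow> real \<Rightarrow> real \<Rightarrow> real" where
  "Cf w t s = (\<Sum>j\<in>J. cj j w * ilen t s (sb j) (eb j))"
definition fac :: "pt \<Rightarrow> real \<Rightarrow> real \<times> real \<times> real \<Rightarrow> real" where
  "fac w t x = (if \<not> nice w \<or> H < t then 1 else
     (if H < t + fst x / (2 * RR w) then exp (Cf w t H)
      else exp (Cf w t (t + fst x / (2 * RR w))) *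
        exp (- theta (t + fst x / (2 * RR w)) * (fst (stepw w x) - fst w)
             - phi (t + fst x / (2 * RR w)) * (snd (stepw w x) - snd w))))"
definition psi :: "nat \<Rightarrow> pt \<Rightarrow> real \<Rightarrow> (nat \<Rightarrow> real \<times> real \<times> real) \<Rightarrow> real" where
  "psi K w t \<omega> = (\<Prod>k<K. fac (chain w \<omega> k) (t + jtime w \<omega> k) (\<omega> k))"

lemma unique_block:
  assumes "i \<in> J" "j \<in> J" "sb i < s" "s \<le> eb i" "sb j < s" "s \<le> eb j" shows "i = j"
  using disj[of i j] assms by force

lemma sum_single:
  assumes "j0 \<in> J" "\<And>j. j \<in> J \<Longrightarrow> j \<noteq> j0 \<Longrightarrow> f j = 0"
  shows "(\<Sum>j\<in>J. f j) = f j0"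
  using sum.remove[OF finJ assms(1), of f] assms(2) by simp

lemma theta_cases: "(theta s = 0 \<and> phi s = 0 \<and> (\<forall>j\<in>J. \<not> (sb j < s \<and> s \<le> eb j))) \<or>
   (\<exists>j\<in>J. sb j < s \<and> s \<le> eb j \<and> theta s = th j \<and> phi s = ph j)"
proof (cases "\<exists>j\<in>J. sb j < s \<and> s \<le> eb j")
  case True
  then obtain j0 where j0: "j0 \<in> J" "sb j0 < s" "s \<le> eb j0" by blast
  have "theta s = th j0" unfolding theta_def
    by (subst sum_single[OF j0(1)]) (use j0 unique_block in auto)
  moreover have "phi s = ph j0" unfolding phi_def
    by (subst sum_single[OF j0(1)]) (use j0 unique_block in auto)
  ultimately show ?thesis using j0 by blast
next
  case False
  have "theta s = 0" unfolding theta_def using False by (auto intro!: sum.neutral)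
  moreover have "phi s = 0" unfolding phi_def using False by (auto intro!: sum.neutral)
  ultimately show ?thesis using False by blast
qed

lemma theta_gt: "theta s > -1" "phi s > -1"
  using theta_cases[of s] th_gt ph_gt by auto

lemma theta_meas[measurable]: "theta \<in> borel_measurable borel" "phi \<in> borel_measurable borel"
  unfolding theta_def phi_def by measurable

lemma stepw_meas'[measurable (raw)]:
  assumes "f \<in> measurable M B2" "h \<in> measurable M B3"
  shows "(\<lambda>x. stepw (f x) (h x)) \<in> measurable M B2"
proof -
  have "(\<lambda>x. (f x, h x)) \<in> measurable M (B2 \<Otimes>\<^sub>M B3)" using assms by measurable
  from measurable_compose[OF this stepw_meas] show ?thesis by simp
qed

lemma RX_meas[measurable]: "RX \<in> borel_measurable B2" unfolding RX_def by measurable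
lemma RY_meas[measurable]: "RY \<in> borel_measurable B2" unfolding RY_def by measurable

lemma Cf_meas[measurable (raw)]:
  assumes [measurable]: "f \<in> measurable M B2" "g \<in> borel_measurable M" "h \<in> borel_measurable M"
  shows "(\<lambda>x. Cf (f x) (g x) (h x)) \<in> borel_measurable M"
  unfolding Cf_def cj_def ilen_def by measurable

lemma nice_meas[measurable (raw)]:
  assumes [measurable]: "f \<in> measurable M B2"
  shows "Measurable.pred M (\<lambda>x. nice (f x))"
  unfolding nice_def by measurable

lemma fac_meas[measurable (raw)]:
  assumes [measurable]: "f \<in> measurable M B2" "g \<in> borel_measurable M" "h \<in> measurable M B3"
  shows "(\<lambda>x. fac (f x) (g x) (h x)) \<in> borel_measurable M"
  unfolding fac_def by measurable

lemma psi_meas[measurable]: "(\<lambda>\<omega>. psi K w t \<omega>) \<in> borel_measurable QQ"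
  unfolding psi_def by measurable

lemma fac_pos: "fac w t x > 0"
  unfolding fac_def by auto

lemma psi_pos: "psi K w t \<omega> > 0"
  unfolding psi_def by (auto intro!: prod_pos fac_pos)

lemma psi_Suc: "psi (Suc K) w t \<omega> = fac w t (\<omega> 0) * psi K (stepw w (\<omega> 0)) (t + fst (\<omega> 0) / (2 * RR w)) (\<lambda>i. \<omega> (Suc i))"
  unfolding psi_def prod.lessThan_Suc_shift
  by (simp add: chain_shift jtime_shift add.assoc del: jtime.simps(2))

end

lemma fid: fixes R P a b :: real assumes "1 + a > 0" "1 + b > 0"
  shows "2 * (R * P) * a / (1 + a) + 2 * (R * (1 - P)) * b / (1 + b) = 2 * R * (1 - (P / (1 + a) + (1 - P) / (1 + b)))"
proof -
  have "a / (1 + a) = 1 - 1 / (1 + a)" "b / (1 + b) = 1 - 1 / (1 + b)" using assms by (simp_all add: field_simps)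
  hence "2 * (R * P) * a / (1 + a) + 2 * (R * (1 - P)) * b / (1 + b) = 2 * (R * P) * (1 - 1 / (1 + a)) + 2 * (R * (1 - P)) * (1 - 1 / (1 + b))"
    by (metis times_divide_eq_right)
  also have "\<dots> = 2 * R * (1 - (P * (1 / (1 + a)) + (1 - P) * (1 / (1 + b))))"
    by (simp only: algebra_simps)
  also have "\<dots> = 2 * R * (1 - (P / (1 + a) + (1 - P) / (1 + b)))" by simp
  finally show ?thesis .
qed

context blk begin

lemma deriv_id:
  assumes w: "nice w" and tv: "t < v" and ve: "v \<notin> eb ` J"
  shows "(\<Sum>j\<in>J. cj j w * (if max t (sb j) < v \<and> v < eb j then 1 else 0))
       = 2 * RR w * (1 - (PP w / (1 + theta v) + (1 - PP w) / (1 + phi v)))"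
proof -
  have eq: "(max t (sb j) < v \<and> v < eb j) \<longleftrightarrow> (sb j < v \<and> v \<le> eb j)" if "j \<in> J" for j
    using tv ve that by (auto simp: image_iff)
  have s: "(\<Sum>j\<in>J. cj j w * (if max t (sb j) < v \<and> v < eb j then 1 else 0))
       = (\<Sum>j\<in>J. if sb j < v \<and> v \<le> eb j then cj j w else 0)"
  proof (rule sum.cong)
    fix j assume "j \<in> J" thus "cj j w * (if max t (sb j) < v \<and> v < eb j then 1 else 0) = (if sb j < v \<and> v \<le> eb j then cj j w else 0)"
      using eq[of j] by simp
  qed simp
  from theta_cases[of v] show ?thesis
  proof
    assume a: "theta v = 0 \<and> phi v = 0 \<and> (\<forall>j\<in>J. \<not> (sb j < v \<and> v \<le> eb j))"
    have z: "(\<Sum>j\<in>J. if sb j < v \<and> v \<le> eb j then cj j w else 0) = 0"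
      using a by (auto intro!: sum.neutral)
    have l: "(\<Sum>j\<in>J. cj j w * (if max t (sb j) < v \<and> v < eb j then 1 else 0)) = 0"
      using s z by linarith
    have r: "2 * RR w * (1 - (PP w / (1 + theta v) + (1 - PP w) / (1 + phi v))) = 0"
      using a by simp
    show ?thesis using l r by linarith
  next
    assume "\<exists>j\<in>J. sb j < v \<and> v \<le> eb j \<and> theta v = th j \<and> phi v = ph j"
    then obtain j0 where j0: "j0 \<in> J" "sb j0 < v" "v \<le> eb j0" "theta v = th j0" "phi v = ph j0" by blast
    have "(\<Sum>j\<in>J. if sb j < v \<and> v \<le> eb j then cj j w else 0) = cj j0 w"
      by (subst sum_single[OF j0(1)]) (use j0 unique_block in auto)
    moreover have "1 + th j0 > 0" "1 + ph j0 > 0" using th_gt[OF j0(1)] ph_gt[OF j0(1)] by auto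
    moreover have "cj j0 w = 2 * RR w * (1 - (PP w / (1 + th j0) + (1 - PP w) / (1 + ph j0)))"
      using fid[OF calculation(2,3), of "RR w" "PP w"] unfolding cj_def RX_def RY_def by simp
    ultimately show ?thesis using s j0(4,5) by simp
  qed
qed

lemma Cf_cont: "continuous_on A (\<lambda>s. Cf w t s)"
  unfolding Cf_def ilen_def by (intro continuous_intros)

lemma Cf_same[simp]: "Cf w t t = 0"
  unfolding Cf_def by simp

lemma U_int:
  assumes w: "nice w" and tH: "t \<le> H"
  defines "h \<equiv> (\<lambda>U. if H < t + U / (2 * RR w) then exp (Cf w t H)
      else exp (Cf w t (t + U / (2 * RR w))) *
           (PP w / (1 + theta (t + U / (2 * RR w))) + (1 - PP w) / (1 + phi (t + U / (2 * RR w)))))"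
  shows "(\<integral>\<^sup>+U. ennreal (exponential_density 1 U * h U) \<partial>lborel) = 1"
proof -
  define R where "R = RR w"
  have R: "R \<ge> 1" using nice_RR[OF w] R_def by simp
  define P where "P = PP w"
  have P: "0 < P" "P < 1" using nice_PP[OF w] P_def by auto
  define uH where "uH = 2 * R * (H - t)"
  have uH: "uH \<ge> 0" using tH R uH_def by simp
  define sf where "sf = (\<lambda>u. t + u / (2 * R))"
  define Phi where "Phi = (\<lambda>u. exp (Cf w t (sf u) - u))"
  define mm where "mm = (\<lambda>v. P / (1 + theta v) + (1 - P) / (1 + phi v))"
  have mm_pos: "mm v > 0" for v
  proof -
    have "1 + theta v > 0" "1 + phi v > 0" using theta_gt[of v] by auto
    hence "P / (1 + theta v) > 0" "(1 - P) / (1 + phi v) > 0" using P by auto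
    thus ?thesis unfolding mm_def by linarith
  qed
  have sf_le: "sf u \<le> H \<longleftrightarrow> u \<le> uH" for u
    unfolding sf_def uH_def using R by (simp add: field_simps)
  have sfuH: "sf uH = H" unfolding sf_def uH_def using R by simp
  define f1 where "f1 = (\<lambda>u. if u \<in> {0..uH} then mm (sf u) * Phi u else 0)"
  define f2 where "f2 = (\<lambda>u. if u \<in> {uH..} then exp (Cf w t H) * exp (- 1 * u) else 0)"
  have pw: "exponential_density 1 u * h u = f1 u + f2 u" if un: "u \<noteq> uH" for u
  proof -
    consider "u < 0" | "0 \<le> u" "u < uH" | "uH < u" using un by (metis less_linear not_less)
    thus ?thesis
    proof cases
      case 1 thus ?thesis using uH unfolding f1_def f2_def exponential_density_def by auto
    next
      case 2
      hence "\<not> H < t + u / (2 * RR w)" using sf_le[of u] unfolding sf_def R_def by simp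
      hence "h u = exp (Cf w t (sf u)) * mm (sf u)" unfolding h_def mm_def sf_def R_def P_def by simp
      thus ?thesis using 2 unfolding f1_def f2_def exponential_density_def Phi_def
        by (simp add: exp_diff exp_minus field_simps)
    next
      case 3
      hence "H < t + u / (2 * RR w)" using sf_le[of u] unfolding sf_def R_def by simp
      hence "h u = exp (Cf w t H)" unfolding h_def by simp
      thus ?thesis using 3 uH unfolding f1_def f2_def exponential_density_def by simp
    qed
  qed
  have f1_nn: "f1 u \<ge> 0" for u unfolding f1_def Phi_def using mm_pos[of "sf u"] by simp
  have f2_nn: "f2 u \<ge> 0" for u unfolding f2_def by simp
  have wm[measurable]: "(\<lambda>x::real. w) \<in> measurable borel B2" by (simp add: space_pair_measure)
  have f1_meas: "f1 \<in> borel_measurable borel"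
    unfolding f1_def mm_def Phi_def sf_def by measurable
  have f2_meas: "f2 \<in> borel_measurable borel"
    unfolding f2_def by measurable
  define S where "S = insert 0 ((\<lambda>v. 2 * R * (v - t)) ` (sb ` J \<union> eb ` J))"
  have finS: "finite S" unfolding S_def using finJ by simp
  have der: "((\<lambda>u. - Phi u) has_vector_derivative (mm (sf u) * Phi u)) (at u)"
    if u: "u \<in> {0..uH} - S" for u
  proof -
    have u0: "u > 0" using u unfolding S_def by auto
    have st: "sf u > t" unfolding sf_def using u0 R by simp
    have sJ: "sf u \<noteq> sb j" "sf u \<noteq> eb j" if "j \<in> J" for j
    proof -
      have "u = 2 * R * (sf u - t)" unfolding sf_def using R by simp
      thus "sf u \<noteq> sb j" "sf u \<noteq> eb j" using u that unfolding S_def by auto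
    qed
    have dsf: "(sf has_real_derivative 1 / (2 * R)) (at u)"
      unfolding sf_def using R by (auto intro!: derivative_eq_intros)
    define G' where "G' = (\<Sum>j\<in>J. cj j w * ((if max t (sb j) < sf u \<and> sf u < eb j then 1 else 0) * (1 / (2 * R))))"
    have dG: "((\<lambda>u. Cf w t (sf u)) has_real_derivative G') (at u)"
      unfolding Cf_def G'_def
    proof (intro DERIV_sum DERIV_cmult)
      fix j assume j: "j \<in> J"
      have "sf u \<noteq> max t (sb j)" using st sJ[OF j] by (auto simp: max_def)
      from DERIV_chain2[OF ilen_deriv[OF this sJ(2)[OF j]] dsf]
      show "((\<lambda>x. ilen t (sf x) (sb j) (eb j)) has_real_derivative
              (if max t (sb j) < sf u \<and> sf u < eb j then 1 else 0) * (1 / (2 * R))) (at u)" .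
    qed
    have G'eq: "G' = 1 - mm (sf u)"
    proof -
      have "G' = (1 / (2 * R)) * (\<Sum>j\<in>J. cj j w * (if max t (sb j) < sf u \<and> sf u < eb j then 1 else 0))"
        unfolding G'_def sum_distrib_left by (rule sum.cong) auto
      also have "\<dots> = 1 - mm (sf u)"
        using R unfolding deriv_id[OF w st] mm_def R_def P_def
        by (subst deriv_id[OF w st]) (use sJ in \<open>auto simp: image_iff\<close>)
      finally show ?thesis .
    qed
    have "((\<lambda>u. - Phi u) has_real_derivative - (Phi u * (G' - 1))) (at u)"
      unfolding Phi_def by (auto intro!: derivative_eq_intros dG)
    thus ?thesis using G'eq by (simp add: has_real_derivative_iff_has_vector_derivative algebra_simps)
  qed
  have R0: "2 * R \<noteq> 0" using R by simp
  have cont: "continuous_on {0..uH} (\<lambda>u. - Phi u)"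
    unfolding Phi_def sf_def Cf_def ilen_def by (intro continuous_intros ballI R0)
  have ftc: "((\<lambda>u. mm (sf u) * Phi u) has_integral (- Phi uH - - Phi 0)) {0..uH}"
    by (rule fundamental_theorem_of_calculus_strong[OF finS uH der cont]) auto
  have Phi0: "Phi 0 = 1" unfolding Phi_def sf_def by simp
  have PhiuH: "Phi uH = exp (Cf w t H) * exp (- 1 * uH)" unfolding Phi_def sfuH by (simp add: exp_diff exp_minus field_simps)
  have I1: "(f1 has_integral (1 - Phi uH)) UNIV"
    using ftc Phi0 unfolding f1_def has_integral_restrict_UNIV by simp
  have I2: "(f2 has_integral (Phi uH)) UNIV"
  proof -
    have "((\<lambda>x. exp (Cf w t H) * exp (- 1 * x)) has_integral exp (Cf w t H) * (exp (- 1 * uH) / 1)) {uH..}"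
      by (intro has_integral_mult_right has_integral_exp_minus_to_infinity) simp
    thus ?thesis unfolding f2_def has_integral_restrict_UNIV PhiuH by simp
  qed
  have "1 - Phi uH \<ge> 0" by (rule has_integral_nonneg[OF I1]) (rule f1_nn)
  have Phinn: "Phi uH \<ge> 0" unfolding Phi_def by simp
  have "(\<integral>\<^sup>+U. ennreal (exponential_density 1 U * h U) \<partial>lborel) = (\<integral>\<^sup>+U. ennreal (f1 U) + ennreal (f2 U) \<partial>lborel)"
  proof (rule nn_integral_cong_AE)
    show "AE U in lborel. ennreal (exponential_density 1 U * h U) = ennreal (f1 U) + ennreal (f2 U)"
      using AE_lborel_singleton[of uH]
    proof eventually_elim
      case (elim U)
      show ?case using pw[OF elim] f1_nn[of U] f2_nn[of U] by simp
    qed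
  qed
  also have "\<dots> = (\<integral>\<^sup>+U. ennreal (f1 U) \<partial>lborel) + (\<integral>\<^sup>+U. ennreal (f2 U) \<partial>lborel)"
    by (rule nn_integral_add) (use f1_meas f2_meas in auto)
  also have "\<dots> = ennreal (1 - Phi uH) + ennreal (Phi uH)"
    using nn_integral_has_integral_lborel[OF f1_meas f1_nn I1] nn_integral_has_integral_lborel[OF f2_meas f2_nn I2]
    by simp
  also have "\<dots> = ennreal (1 - Phi uH + Phi uH)"
    by (rule ennreal_plus[symmetric]) (use \<open>1 - Phi uH \<ge> 0\<close> Phinn in auto)
  also have "\<dots> = 1" by simp
  finally show ?thesis .
qed

end

context blk begin

lemma fac_meas_B3: "(\<lambda>x. ennreal (fac w t x)) \<in> borel_measurable B3"
proof -
  have [measurable]: "(\<lambda>x::real \<times> real \<times> real. w) \<in> measurable B3 B2" by (simp add: space_pair_measure)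
  show ?thesis by measurable
qed

lemma fac_int: "(\<integral>\<^sup>+x. ennreal (fac w t x) \<partial>Dstep) \<le> 1"
proof (cases "\<not> nice w \<or> H < t")
  case True
  interpret prob_space Dstep by (rule prob_space_Dstep)
  have "(\<integral>\<^sup>+x. ennreal (fac w t x) \<partial>Dstep) = (\<integral>\<^sup>+x. 1 \<partial>Dstep)"
    by (rule nn_integral_cong) (use True in \<open>simp add: fac_def\<close>)
  thus ?thesis by (simp add: emeasure_space_1)
next
  case False
  hence w: "nice w" and tH: "t \<le> H" by auto
  interpret UE: prob_space "UN01 \<Otimes>\<^sub>M E1"
    by (intro prob_space_pair prob_space_exponential_density prob_space_uniform_measure) auto
  interpret E: prob_space E1 by (rule prob_space_exponential_density) simp
  define h where "h \<equiv> (\<lambda>U. if H < t + U / (2 * RR w) then exp (Cf w t H)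
      else exp (Cf w t (t + U / (2 * RR w))) *
           (PP w / (1 + theta (t + U / (2 * RR w))) + (1 - PP w) / (1 + phi (t + U / (2 * RR w)))))"
  have m: "(\<lambda>x. ennreal (fac w t x)) \<in> borel_measurable (E1 \<Otimes>\<^sub>M (UN01 \<Otimes>\<^sub>M E1))"
    unfolding measurable_cong_sets[OF sets_Dstep[unfolded Dstep_def] refl] by (rule fac_meas_B3)
  have "(\<integral>\<^sup>+x. ennreal (fac w t x) \<partial>Dstep) = (\<integral>\<^sup>+U. \<integral>\<^sup>+y. ennreal (fac w t (U, y)) \<partial>(UN01 \<Otimes>\<^sub>M E1) \<partial>E1)"
    unfolding Dstep_def by (rule UE.nn_integral_fst[OF m, symmetric])
  also have "\<dots> = (\<integral>\<^sup>+U. ennreal (h U) \<partial>E1)"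
  proof (rule nn_integral_cong)
    fix U :: real
    define t1 where "t1 = t + U / (2 * RR w)"
    show "(\<integral>\<^sup>+y. ennreal (fac w t (U, y)) \<partial>(UN01 \<Otimes>\<^sub>M E1)) = ennreal (h U)"
    proof (cases "H < t1")
      case True
      have "(\<integral>\<^sup>+y. ennreal (fac w t (U, y)) \<partial>(UN01 \<Otimes>\<^sub>M E1)) = (\<integral>\<^sup>+y. ennreal (exp (Cf w t H)) \<partial>(UN01 \<Otimes>\<^sub>M E1))"
        by (rule nn_integral_cong) (use True w tH in \<open>simp add: fac_def t1_def\<close>)
      also have "\<dots> = ennreal (exp (Cf w t H))" by (simp add: UE.emeasure_space_1)
      finally show ?thesis using True unfolding h_def t1_def by simp
    next
      case False
      have "(\<integral>\<^sup>+y. ennreal (fac w t (U, y)) \<partial>(UN01 \<Otimes>\<^sub>M E1))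
          = (\<integral>\<^sup>+y. ennreal (exp (Cf w t t1)) * ennreal (if fst y < PP w then exp (- theta t1 * snd y) else exp (- phi t1 * snd y)) \<partial>(UN01 \<Otimes>\<^sub>M E1))"
        by (rule nn_integral_cong) (use False w tH in \<open>auto simp add: fac_def t1_def stepw_def ennreal_mult'[symmetric]\<close>)
      also have "\<dots> = ennreal (exp (Cf w t t1)) * (\<integral>\<^sup>+y. ennreal (if fst y < PP w then exp (- theta t1 * snd y) else exp (- phi t1 * snd y)) \<partial>(UN01 \<Otimes>\<^sub>M E1))"
        by (rule nn_integral_cmult) measurable
      also have "\<dots> = ennreal (exp (Cf w t t1)) * ennreal (PP w / (1 + theta t1) + (1 - PP w) / (1 + phi t1))"
        using nice_PP[OF w] by (subst VW_int) (auto intro: theta_gt)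
      also have "\<dots> = ennreal (h U)" unfolding h_def t1_def[symmetric] using False
        by (simp add: ennreal_mult'[symmetric])
      finally show ?thesis .
    qed
  qed
  also have "\<dots> = (\<integral>\<^sup>+U. ennreal (exponential_density 1 U * h U) \<partial>lborel)"
  proof -
    have [measurable]: "(\<lambda>x::real. w) \<in> measurable borel B2" by (simp add: space_pair_measure)
    have hm: "(\<lambda>U. ennreal (h U)) \<in> borel_measurable borel" unfolding h_def by measurable
    show ?thesis
      by (subst nn_integral_density[OF _ hm[unfolded measurable_lborel2[symmetric]]])
         (auto simp: ennreal_mult'[symmetric] exponential_density_nonneg)
  qed
  also have "\<dots> = 1" unfolding h_def by (rule U_int[OF w tH])
  finally show ?thesis by simp
qed

lemma psi_int: "(\<integral>\<^sup>+\<omega>. ennreal (psi K w t \<omega>) \<partial>QQ) \<le> 1"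
proof (induction K arbitrary: w t)
  case 0
  interpret prob_space QQ unfolding QQ_def
    by (intro prob_space_PiM prob_space_Dstep)
  show ?case by (simp add: psi_def emeasure_space_1)
next
  case (Suc K)
  have "(\<integral>\<^sup>+\<omega>. ennreal (psi (Suc K) w t \<omega>) \<partial>QQ)
     = (\<integral>\<^sup>+x. (\<integral>\<^sup>+\<omega>. ennreal (psi (Suc K) w t (case_nat x \<omega>)) \<partial>QQ) \<partial>Dstep)"
    by (rule QQ_decomp) measurable
  also have "\<dots> = (\<integral>\<^sup>+x. ennreal (fac w t x) * (\<integral>\<^sup>+\<omega>. ennreal (psi K (stepw w x) (t + fst x / (2 * RR w)) \<omega>) \<partial>QQ) \<partial>Dstep)"
  proof (rule nn_integral_cong)
    fix x
    have "(\<integral>\<^sup>+\<omega>. ennreal (psi (Suc K) w t (case_nat x \<omega>)) \<partial>QQ)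
       = (\<integral>\<^sup>+\<omega>. ennreal (fac w t x) * ennreal (psi K (stepw w x) (t + fst x / (2 * RR w)) \<omega>) \<partial>QQ)"
      by (rule nn_integral_cong) (simp add: psi_Suc ennreal_mult' fac_pos[THEN less_imp_le])
    also have "\<dots> = ennreal (fac w t x) * (\<integral>\<^sup>+\<omega>. ennreal (psi K (stepw w x) (t + fst x / (2 * RR w)) \<omega>) \<partial>QQ)"
      by (rule nn_integral_cmult) measurable
    finally show "(\<integral>\<^sup>+\<omega>. ennreal (psi (Suc K) w t (case_nat x \<omega>)) \<partial>QQ) = \<dots>" .
  qed
  also have "\<dots> \<le> (\<integral>\<^sup>+x. ennreal (fac w t x) \<partial>Dstep)"
  proof (rule nn_integral_mono)
    fix x
    have h: "(\<integral>\<^sup>+\<omega>. ennreal (psi K (stepw w x) (t + fst x / (2 * RR w)) \<omega>) \<partial>QQ) \<le> 1" by (rule Suc.IH)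
    show "ennreal (fac w t x) * (\<integral>\<^sup>+\<omega>. ennreal (psi K (stepw w x) (t + fst x / (2 * RR w)) \<omega>) \<partial>QQ) \<le> ennreal (fac w t x)"
      using mult_left_mono[OF h, of "ennreal (fac w t x)"] by simp
  qed
  also have "\<dots> \<le> 1" by (rule fac_int)
  finally show ?case .
qed


end

locale det = blk +
  fixes w0 :: pt and \<omega> :: "nat \<Rightarrow> real \<times> real \<times> real" and Y :: "real \<Rightarrow> pt" and lb :: "int \<Rightarrow> real"
  assumes goodU: "\<And>i. fst (\<omega> i) > 0" and goodW: "\<And>i. snd (snd (\<omega> i)) > 0"
  and H0: "0 \<le> H"
  and path: "\<And>r. 0 \<le> r \<Longrightarrow> r \<le> H \<Longrightarrow> xi w0 \<omega> r = Y r"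
  and ymono: "\<And>r r'. 0 \<le> r \<Longrightarrow> r \<le> r' \<Longrightarrow> r' \<le> H \<Longrightarrow> fst (Y r) \<le> fst (Y r') \<and> snd (Y r) \<le> snd (Y r')"
  and ynice: "\<And>r. 0 \<le> r \<Longrightarrow> r \<le> H \<Longrightarrow> nice (Y r)"
  and blocks: "\<And>j. j \<in> J \<Longrightarrow> 0 \<le> sb j \<and> sb j \<le> eb j \<and> eb j \<le> H"
  and lbj: "\<And>j r. j \<in> J \<Longrightarrow> sb j < r \<Longrightarrow> r < eb j \<Longrightarrow> lb j \<le> cj j (Y r)"
begin

abbreviation "Z k \<equiv> chain w0 \<omega> k"
abbreviation "tau k \<equiv> jtime w0 \<omega> k"

lemma tau_Suc: "tau (Suc k) = tau k + fst (\<omega> k) / (2 * RR (Z k))" by (rule jtime.simps(2))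

declare jtime.simps(2)[simp del]

lemma nj0: "njumps w0 \<omega> 0 = 0"
  unfolding njumps_def
proof (rule Least_equality)
  show "\<not> (0 < RR (Z 0) \<and> tau (Suc 0) \<le> 0)"
  proof
    assume h: "0 < RR (Z 0) \<and> tau (Suc 0) \<le> 0"
    hence "fst (\<omega> 0) / (2 * RR w0) > 0" using goodU[of 0] by (intro divide_pos_pos) auto
    thus False using h by (simp add: tau_Suc)
  qed
qed simp

lemma w0_eq: "w0 = Y 0"
  using path[of 0] H0 nj0 unfolding xi_def by simp

lemma Z_nice: "nice (Z k)"
proof (induction k)
  case 0 thus ?case using w0_eq ynice[of 0] H0 by simp
next
  case (Suc k)
  thus ?case using goodW[of k] unfolding chain_Suc' stepw_def nice_def by auto
qed

lemma RR_pos: "RR (Z k) \<ge> 1" using nice_RR[OF Z_nice] .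

lemma tau_less: "tau k < tau (Suc k)"
  using goodU[of k] RR_pos[of k] by (simp add: divide_pos_pos tau_Suc)

lemma tau_smono: "strict_mono tau"
  unfolding strict_mono_Suc_iff using tau_less by blast

lemma tau_le_iff: "tau i \<le> tau k \<longleftrightarrow> i \<le> k"
  using tau_smono by (simp add: strict_mono_less_eq)

lemma tau_less_iff: "tau i < tau k \<longleftrightarrow> i < k"
  using tau_smono by (simp add: strict_mono_less)

lemma tau0: "tau 0 = 0" by simp

lemma nj_char:
  assumes "tau m \<le> r" "r < tau (Suc m)"
  shows "njumps w0 \<omega> r = m"
  unfolding njumps_def
proof (rule Least_equality)
  show "\<not> (0 < RR (Z m) \<and> tau (Suc m) \<le> r)" using assms by simp
next
  fix y assume y: "\<not> (0 < RR (Z y) \<and> tau (Suc y) \<le> r)"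
  show "m \<le> y"
  proof (rule ccontr)
    assume "\<not> m \<le> y"
    hence "Suc y \<le> m" by simp
    hence "tau (Suc y) \<le> tau m" using tau_le_iff by blast
    thus False using y assms RR_pos[of y] by simp
  qed
qed

lemma xi_char: "tau m \<le> r \<Longrightarrow> r < tau (Suc m) \<Longrightarrow> xi w0 \<omega> r = Z m"
  unfolding xi_def using nj_char by simp

lemma exN: "\<exists>N. tau N \<le> H \<and> H < tau (Suc N)"
proof (rule ccontr)
  assume a: "\<not> ?thesis"
  have all: "tau k \<le> H" for k
  proof (induction k)
    case 0 thus ?case using H0 by simp
  next
    case (Suc k) thus ?case using a by force
  qed
  define \<sigma> where "\<sigma> = (SUP k. tau k)"
  have bdd: "bdd_above (range tau)" by (rule bdd_aboveI[of _ H]) (use all in auto)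
  have le: "tau k \<le> \<sigma>" for k unfolding \<sigma>_def by (rule cSUP_upper[OF _ bdd]) simp
  have lt: "tau k < \<sigma>" for k using tau_less[of k] le[of "Suc k"] by simp
  have \<sigma>H: "\<sigma> \<le> H" unfolding \<sigma>_def by (rule cSUP_least) (use all in auto)
  have \<sigma>0: "0 \<le> \<sigma>" using le[of 0] by simp
  define n0 where "n0 = njumps w0 \<omega> \<sigma>"
  have Y\<sigma>: "Y \<sigma> = Z n0" using path[OF \<sigma>0 \<sigma>H] unfolding xi_def n0_def by simp
  define r where "r = tau (Suc n0)"
  have r0: "0 \<le> r" using le[of 0] tau_le_iff[of 0 "Suc n0"] unfolding r_def by simp
  have "xi w0 \<omega> r = Z (Suc n0)" unfolding r_def by (rule xi_char) (use tau_less in auto)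
  hence Yr: "Y r = Z (Suc n0)" using path[OF r0] lt[of "Suc n0"] \<sigma>H unfolding r_def by simp
  have "fst (Y r) \<le> fst (Y \<sigma>) \<and> snd (Y r) \<le> snd (Y \<sigma>)"
    using ymono[OF r0 _ \<sigma>H] lt[of "Suc n0"] unfolding r_def by simp
  thus False using Yr Y\<sigma> goodW[of n0] unfolding chain_Suc' stepw_def by (auto split: if_splits)
qed

definition N where "N = (SOME N. tau N \<le> H \<and> H < tau (Suc N))"

lemma N_prop: "tau N \<le> H" "H < tau (Suc N)"
  using someI_ex[OF exN] unfolding N_def by auto

lemma tau_nonneg: "0 \<le> tau k" using tau_le_iff[of 0 k] by simp

lemma ex_m:
  assumes "0 \<le> r" "r \<le> H"
  shows "\<exists>m\<le>N. tau m \<le> r \<and> r < tau (Suc m)"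
proof -
  have ex: "\<exists>k. r < tau k" using N_prop(2) assms by (intro exI[of _ "Suc N"]) simp
  define k0 where "k0 = (LEAST k. r < tau k)"
  have k0: "r < tau k0" unfolding k0_def by (rule LeastI_ex[OF ex])
  have k0ne: "k0 \<noteq> 0"
  proof
    assume "k0 = 0" with k0 assms show False by simp
  qed
  define m where "m = k0 - 1"
  have Sm: "Suc m = k0" using k0ne unfolding m_def by simp
  have "\<not> r < tau m" unfolding k0_def m_def by (rule not_less_Least) (use k0ne k0_def in simp)
  hence tm: "tau m \<le> r" by simp
  have "m \<le> N"
  proof (rule ccontr)
    assume "\<not> m \<le> N"
    hence "tau (Suc N) \<le> tau m" using tau_le_iff by simp
    thus False using tm assms N_prop by simp
  qed
  thus ?thesis using tm k0 Sm by blast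
qed

lemma Y_Z: "tau m \<le> r \<Longrightarrow> r < tau (Suc m) \<Longrightarrow> r \<le> H \<Longrightarrow> Y r = Z m"
  using path[of r] xi_char[of m r] tau_nonneg[of m] by simp

lemma fac_big: "N < k \<Longrightarrow> fac (Z k) (tau k) (\<omega> k) = 1"
proof -
  assume "N < k"
  hence "tau (Suc N) \<le> tau k" using tau_le_iff by simp
  thus ?thesis using N_prop unfolding fac_def by simp
qed

lemma psi_stable: "Suc N \<le> K \<Longrightarrow> psi K w0 0 \<omega> = psi (Suc N) w0 0 \<omega>"
proof (induction K rule: dec_induct)
  case base thus ?case by simp
next
  case (step K)
  thus ?case unfolding psi_def using fac_big[of K] by simp
qed

definition lg where "lg k = Cf (Z k) (tau k) (min (tau (Suc k)) H) -
   (if k < N then theta (tau (Suc k)) * (fst (Z (Suc k)) - fst (Z k)) + phi (tau (Suc k)) * (snd (Z (Suc k)) - snd (Z k)) else 0)"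

lemma fac_lg: "k \<le> N \<Longrightarrow> fac (Z k) (tau k) (\<omega> k) = exp (lg k)"
proof -
  assume kN: "k \<le> N"
  have tk: "tau k \<le> H" using kN tau_le_iff[of k N] N_prop by simp
  show ?thesis
  proof (cases "k < N")
    case True
    hence "tau (Suc k) \<le> H" using tau_le_iff[of "Suc k" N] N_prop by simp
    thus ?thesis using True tk Z_nice[of k] unfolding fac_def lg_def
      by (simp add: tau_Suc[symmetric] chain_Suc'[symmetric] exp_add[symmetric])
  next
    case False
    hence "k = N" using kN by simp
    thus ?thesis using tk Z_nice[of k] N_prop unfolding fac_def lg_def by (simp add: tau_Suc[symmetric])
  qed
qed

lemma psi_lg: "psi (Suc N) w0 0 \<omega> = exp (\<Sum>k<Suc N. lg k)"
  unfolding psi_def exp_sum[OF finite_lessThan] by (rule prod.cong) (auto simp: fac_lg)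

lemma ilen_tele: "m \<le> N \<Longrightarrow> (\<Sum>k<m. ilen (tau k) (tau (Suc k)) p q) = ilen 0 (tau m) p q"
proof (induction m)
  case 0 thus ?case by simp
next
  case (Suc m)
  hence "(\<Sum>k<Suc m. ilen (tau k) (tau (Suc k)) p q) = ilen 0 (tau m) p q + ilen (tau m) (tau (Suc m)) p q"
    by simp
  also have "\<dots> = ilen 0 (tau (Suc m)) p q"
    by (rule ilen_add) (use tau_nonneg[of m] tau_less[of m] in auto)
  finally show ?case .
qed

lemma ilen_total: "(\<Sum>k<Suc N. ilen (tau k) (min (tau (Suc k)) H) p q) = ilen 0 H p q"
proof -
  have "(\<Sum>k<Suc N. ilen (tau k) (min (tau (Suc k)) H) p q) = (\<Sum>k<N. ilen (tau k) (tau (Suc k)) p q) + ilen (tau N) H p q"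
  proof -
    have "(\<Sum>k<N. ilen (tau k) (min (tau (Suc k)) H) p q) = (\<Sum>k<N. ilen (tau k) (tau (Suc k)) p q)"
    proof (rule sum.cong)
      fix k assume "k \<in> {..<N}"
      hence "tau (Suc k) \<le> H" using tau_le_iff[of "Suc k" N] N_prop by simp
      thus "ilen (tau k) (min (tau (Suc k)) H) p q = ilen (tau k) (tau (Suc k)) p q" by simp
    qed simp
    thus ?thesis using N_prop by simp
  qed
  also have "\<dots> = ilen 0 H p q"
    unfolding ilen_tele[OF order.refl] by (rule ilen_add) (use tau_nonneg[of N] N_prop in auto)
  finally show ?thesis .
qed

lemma cj_lb:
  assumes j: "j \<in> J" and k: "k \<le> N" and pos: "0 < ilen (tau k) (min (tau (Suc k)) H) (sb j) (eb j)"
  shows "lb j \<le> cj j (Z k)"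
proof -
  define lo where "lo = max (tau k) (sb j)"
  define hi where "hi = min (min (tau (Suc k)) H) (eb j)"
  have "0 < min (min (tau (Suc k)) H) (eb j) - max (tau k) (sb j)"
    using pos unfolding ilen_def by (simp only: less_max_iff_disj) linarith
  hence lohi: "lo < hi" unfolding lo_def hi_def by linarith
  define r where "r = (lo + hi) / 2"
  have r1: "lo < r" "r < hi" using lohi unfolding r_def by auto
  have "tau k \<le> r" "r < tau (Suc k)" "r \<le> H" "sb j < r" "r < eb j"
    using r1 unfolding lo_def hi_def by auto
  hence "Y r = Z k" using Y_Z by blast
  thus ?thesis using lbj[OF j \<open>sb j < r\<close> \<open>r < eb j\<close>] by simp
qed

lemma partA: "(\<Sum>k<Suc N. Cf (Z k) (tau k) (min (tau (Suc k)) H)) \<ge> (\<Sum>j\<in>J. lb j * (eb j - sb j))"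
proof -
  have "(\<Sum>k<Suc N. Cf (Z k) (tau k) (min (tau (Suc k)) H))
      = (\<Sum>j\<in>J. \<Sum>k<Suc N. cj j (Z k) * ilen (tau k) (min (tau (Suc k)) H) (sb j) (eb j))"
    unfolding Cf_def by (rule sum.swap)
  also have "\<dots> \<ge> (\<Sum>j\<in>J. \<Sum>k<Suc N. lb j * ilen (tau k) (min (tau (Suc k)) H) (sb j) (eb j))"
  proof (intro sum_mono)
    fix j k assume j: "j \<in> J" and k: "k \<in> {..<Suc N}"
    show "lb j * ilen (tau k) (min (tau (Suc k)) H) (sb j) (eb j) \<le> cj j (Z k) * ilen (tau k) (min (tau (Suc k)) H) (sb j) (eb j)"
    proof (cases "0 < ilen (tau k) (min (tau (Suc k)) H) (sb j) (eb j)")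
      case True
      thus ?thesis using cj_lb[OF j _ True] k by (intro mult_right_mono) auto
    next
      case False
      hence "ilen (tau k) (min (tau (Suc k)) H) (sb j) (eb j) = 0" using ilen_nonneg by (metis order.not_eq_order_implies_strict)
      thus ?thesis by simp
    qed
  qed
  also have "(\<Sum>j\<in>J. \<Sum>k<Suc N. lb j * ilen (tau k) (min (tau (Suc k)) H) (sb j) (eb j)) = (\<Sum>j\<in>J. lb j * (eb j - sb j))"
  proof (rule sum.cong)
    fix j assume j: "j \<in> J"
    have "(\<Sum>k<Suc N. lb j * ilen (tau k) (min (tau (Suc k)) H) (sb j) (eb j)) = lb j * ilen 0 H (sb j) (eb j)"
      unfolding sum_distrib_left[symmetric] ilen_total ..
    also have "ilen 0 H (sb j) (eb j) = eb j - sb j" using blocks[OF j] unfolding ilen_def by simp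
    finally show "(\<Sum>k<Suc N. lb j * ilen (tau k) (min (tau (Suc k)) H) (sb j) (eb j)) = lb j * (eb j - sb j)" .
  qed simp
  finally show ?thesis by simp
qed

lemma cnt:
  fixes pr :: "pt \<Rightarrow> real"
  assumes "0 \<le> r" "r \<le> H"
  shows "(\<Sum>k<N. if tau (Suc k) \<le> r then pr (Z (Suc k)) - pr (Z k) else 0) = pr (Y r) - pr (Z 0)"
proof -
  obtain m where m: "m \<le> N" "tau m \<le> r" "r < tau (Suc m)" using ex_m[OF assms] by blast
  have iff: "tau (Suc k) \<le> r \<longleftrightarrow> k < m" for k
  proof
    assume "tau (Suc k) \<le> r"
    hence "tau (Suc k) < tau (Suc m)" using m by simp
    thus "k < m" using tau_less_iff by simp
  next
    assume "k < m"
    hence "tau (Suc k) \<le> tau m" using tau_le_iff by simp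
    thus "tau (Suc k) \<le> r" using m by simp
  qed
  have "(\<Sum>k<N. if tau (Suc k) \<le> r then pr (Z (Suc k)) - pr (Z k) else 0)
      = (\<Sum>k<N. if k \<in> {..<m} then pr (Z (Suc k)) - pr (Z k) else 0)"
    by (rule sum.cong) (auto simp: iff)
  also have "\<dots> = (\<Sum>k\<in>{..<N} \<inter> {..<m}. pr (Z (Suc k)) - pr (Z k))"
    by (rule sum.inter_restrict[symmetric]) simp
  also have "{..<N} \<inter> {..<m} = {..<m}" using m by auto
  also have "(\<Sum>k<m. pr (Z (Suc k)) - pr (Z k)) = pr (Z m) - pr (Z 0)"
    by (rule sum_lessThan_telescope)
  also have "Z m = Y r" using Y_Z[OF m(2,3) assms(2)] by simp
  finally show ?thesis .
qed

lemma partB: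
  fixes pr :: "pt \<Rightarrow> real" and c :: "int \<Rightarrow> real"
  shows "(\<Sum>k<N. (\<Sum>j\<in>J. if sb j < tau (Suc k) \<and> tau (Suc k) \<le> eb j then c j else 0) * (pr (Z (Suc k)) - pr (Z k)))
       = (\<Sum>j\<in>J. c j * (pr (Y (eb j)) - pr (Y (sb j))))"
proof -
  have "(\<Sum>k<N. (\<Sum>j\<in>J. if sb j < tau (Suc k) \<and> tau (Suc k) \<le> eb j then c j else 0) * (pr (Z (Suc k)) - pr (Z k)))
      = (\<Sum>k<N. \<Sum>j\<in>J. c j * (if sb j < tau (Suc k) \<and> tau (Suc k) \<le> eb j then pr (Z (Suc k)) - pr (Z k) else 0))"
    unfolding sum_distrib_right by (intro sum.cong refl) simp
  also have "\<dots> = (\<Sum>j\<in>J. c j * (\<Sum>k<N. if sb j < tau (Suc k) \<and> tau (Suc k) \<le> eb j then pr (Z (Suc k)) - pr (Z k) else 0))"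
    unfolding sum_distrib_left by (rule sum.swap)
  also have "\<dots> = (\<Sum>j\<in>J. c j * (pr (Y (eb j)) - pr (Y (sb j))))"
  proof (rule sum.cong)
    fix j assume j: "j \<in> J"
    have "(\<Sum>k<N. if sb j < tau (Suc k) \<and> tau (Suc k) \<le> eb j then pr (Z (Suc k)) - pr (Z k) else 0)
       = (\<Sum>k<N. (if tau (Suc k) \<le> eb j then pr (Z (Suc k)) - pr (Z k) else 0) - (if tau (Suc k) \<le> sb j then pr (Z (Suc k)) - pr (Z k) else 0))"
      by (rule sum.cong) (use blocks[OF j] in auto)
    also have "\<dots> = (pr (Y (eb j)) - pr (Z 0)) - (pr (Y (sb j)) - pr (Z 0))"
      unfolding sum_subtractf using blocks[OF j] by (simp add: cnt)
    finally show "c j * (\<Sum>k<N. if sb j < tau (Suc k) \<and> tau (Suc k) \<le> eb j then pr (Z (Suc k)) - pr (Z k) else 0)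
       = c j * (pr (Y (eb j)) - pr (Y (sb j)))" by simp
  qed simp
  finally show ?thesis .
qed

theorem det_main:
  "\<exists>K. (\<forall>K'\<ge>K. psi K' w0 0 \<omega> = psi K w0 0 \<omega>) \<and>
     exp (\<Sum>j\<in>J. lb j * (eb j - sb j) - th j * (fst (Y (eb j)) - fst (Y (sb j))) - ph j * (snd (Y (eb j)) - snd (Y (sb j))))
     \<le> psi K w0 0 \<omega>"
proof (intro exI conjI allI impI)
  show "psi K' w0 0 \<omega> = psi (Suc N) w0 0 \<omega>" if "Suc N \<le> K'" for K' by (rule psi_stable[OF that])
  define A where "A = (\<lambda>k. theta (tau (Suc k)) * (fst (Z (Suc k)) - fst (Z k)))"
  define B where "B = (\<lambda>k. phi (tau (Suc k)) * (snd (Z (Suc k)) - snd (Z k)))"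
  have e1: "(\<Sum>k<Suc N. lg k) = (\<Sum>k<Suc N. Cf (Z k) (tau k) (min (tau (Suc k)) H)) - (\<Sum>k<Suc N. if k < N then A k + B k else 0)"
    unfolding lg_def A_def B_def by (rule sum_subtractf)
  have e2: "(\<Sum>k<Suc N. if k < N then A k + B k else 0) = (\<Sum>k<N. A k) + (\<Sum>k<N. B k)"
  proof -
    have "(\<Sum>k<Suc N. if k < N then A k + B k else 0) = (\<Sum>k<N. if k < N then A k + B k else 0)"
      by (simp only: sum.lessThan_Suc) simp
    also have "\<dots> = (\<Sum>k<N. A k + B k)" by (rule sum.cong) simp_all
    also have "\<dots> = (\<Sum>k<N. A k) + (\<Sum>k<N. B k)" by (rule sum.distrib)
    finally show ?thesis .
  qed
  have eA: "(\<Sum>k<N. A k) = (\<Sum>j\<in>J. th j * (fst (Y (eb j)) - fst (Y (sb j))))"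
    unfolding A_def theta_def by (rule partB)
  have eB: "(\<Sum>k<N. B k) = (\<Sum>j\<in>J. ph j * (snd (Y (eb j)) - snd (Y (sb j))))"
    unfolding B_def phi_def by (rule partB)
  have eS: "(\<Sum>j\<in>J. lb j * (eb j - sb j) - th j * (fst (Y (eb j)) - fst (Y (sb j))) - ph j * (snd (Y (eb j)) - snd (Y (sb j))))
     = (\<Sum>j\<in>J. lb j * (eb j - sb j)) - (\<Sum>j\<in>J. th j * (fst (Y (eb j)) - fst (Y (sb j)))) - (\<Sum>j\<in>J. ph j * (snd (Y (eb j)) - snd (Y (sb j))))"
    by (simp only: sum_subtractf)
  have "(\<Sum>k<Suc N. lg k) \<ge> (\<Sum>j\<in>J. lb j * (eb j - sb j) - th j * (fst (Y (eb j)) - fst (Y (sb j))) - ph j * (snd (Y (eb j)) - snd (Y (sb j))))"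
    unfolding eS e1 e2 eA eB using partA by linarith
  thus "exp (\<Sum>j\<in>J. lb j * (eb j - sb j) - th j * (fst (Y (eb j)) - fst (Y (sb j))) - ph j * (snd (Y (eb j)) - snd (Y (sb j))))
     \<le> psi (Suc N) w0 0 \<omega>" unfolding psi_lg by simp
qed

end

lemma prob_QQ: "prob_space QQ"
  unfolding QQ_def by (intro prob_space_PiM prob_space_Dstep)

lemma AE_E1_pos: "AE U in E1. 0 < U"
proof -
  have "AE U in lborel. 0 < exponential_density 1 U \<longrightarrow> 0 < U"
    using AE_lborel_singleton[of 0] by eventually_elim (auto simp: exponential_density_def)
  thus ?thesis by (subst AE_density) auto
qed

lemma AE_Dstep: "AE x in Dstep. 0 < fst x \<and> 0 < snd (snd x)"
proof -
  interpret UE: prob_space "UN01 \<Otimes>\<^sub>M E1"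
    by (intro prob_space_pair prob_space_exponential_density prob_space_uniform_measure) auto
  interpret E: prob_space E1 by (rule prob_space_exponential_density) simp
  interpret U: prob_space UN01 by (intro prob_space_uniform_measure) auto
  interpret P1: pair_sigma_finite E1 "UN01 \<Otimes>\<^sub>M E1" ..
  interpret P2: pair_sigma_finite UN01 E1 ..
  have a2: "AE y in UN01 \<Otimes>\<^sub>M E1. 0 < snd y"
  proof (rule P2.AE_pair_measure)
    have "{y \<in> space (UN01 \<Otimes>\<^sub>M E1). 0 < snd y} = space (UN01 \<Otimes>\<^sub>M E1) \<inter> (UNIV \<times> {0<..})" by (auto simp: space_pair_measure)
    also have "\<dots> \<in> sets (UN01 \<Otimes>\<^sub>M E1)" by (intro sets.Int sets.top pair_measureI) auto
    finally show "{y \<in> space (UN01 \<Otimes>\<^sub>M E1). 0 < snd y} \<in> sets (UN01 \<Otimes>\<^sub>M E1)" .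
    show "AE x in UN01. AE y in E1. 0 < snd (x, y)" by (simp add: AE_E1_pos)
  qed
  show ?thesis unfolding Dstep_def
  proof (rule P1.AE_pair_measure)
    have "{x \<in> space (E1 \<Otimes>\<^sub>M (UN01 \<Otimes>\<^sub>M E1)). 0 < fst x \<and> 0 < snd (snd x)}
        = space (E1 \<Otimes>\<^sub>M (UN01 \<Otimes>\<^sub>M E1)) \<inter> ({0<..} \<times> (UNIV \<times> {0<..}))" by (auto simp: space_pair_measure)
    also have "\<dots> \<in> sets (E1 \<Otimes>\<^sub>M (UN01 \<Otimes>\<^sub>M E1))" by (intro sets.Int sets.top pair_measureI) auto
    finally show "{x \<in> space (E1 \<Otimes>\<^sub>M (UN01 \<Otimes>\<^sub>M E1)). 0 < fst x \<and> 0 < snd (snd x)} \<in> sets (E1 \<Otimes>\<^sub>M (UN01 \<Otimes>\<^sub>M E1))" .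
    show "AE x in E1. AE y in UN01 \<Otimes>\<^sub>M E1. 0 < fst (x, y) \<and> 0 < snd (snd (x, y))"
      using AE_E1_pos a2 by (auto elim!: eventually_mono)
  qed
qed

definition Bad :: "(nat \<Rightarrow> real \<times> real \<times> real) set" where
  "Bad = {\<omega>. \<exists>i. \<not> (0 < fst (\<omega> i) \<and> 0 < snd (snd (\<omega> i)))}"

lemma Bad_sets: "Bad \<in> sets QQ"
proof -
  have "Bad = space QQ \<inter> (\<Union>i. {\<omega>\<in>space QQ. \<not> (0 < fst (\<omega> i) \<and> 0 < snd (snd (\<omega> i)))})"
    unfolding Bad_def space_QQ by auto
  also have "\<dots> \<in> sets QQ" by measurable
  finally show ?thesis .
qed

lemma Bad_null: "emeasure QQ Bad = 0"
proof -
  have "AE \<omega> in QQ. \<forall>i. 0 < fst (\<omega> i) \<and> 0 < snd (snd (\<omega> i))"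
    unfolding AE_all_countable
  proof
    fix i
    show "AE \<omega> in QQ. 0 < fst (\<omega> i) \<and> 0 < snd (snd (\<omega> i))"
      unfolding QQ_def by (rule AE_PiM_component[OF prob_space_Dstep _ AE_Dstep]) simp
  qed
  then obtain N where N: "N \<in> null_sets QQ" "{\<omega>\<in>space QQ. \<not> (\<forall>i. 0 < fst (\<omega> i) \<and> 0 < snd (snd (\<omega> i)))} \<subseteq> N"
    by (auto elim!: AE_E)
  have "Bad \<subseteq> N" using N(2) unfolding Bad_def space_QQ by auto
  thus ?thesis using N(1) Bad_sets by (metis null_sets_subset null_setsD1)
qed

context blk begin

lemma prob_bound:
  assumes c0: "c0 > 0"
  and ev: "\<And>\<omega>. \<omega> \<in> Ev \<Longrightarrow> \<omega> \<notin> Bad \<Longrightarrow> \<exists>K. (\<forall>K'\<ge>K. psi K' w0 0 \<omega> = psi K w0 0 \<omega>) \<and> c0 \<le> psi K w0 0 \<omega>"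
  shows "measure QQ Ev \<le> 1 / c0"
proof (cases "Ev \<in> sets QQ")
  case False thus ?thesis using c0 by (simp add: measure_notin_sets)
next
  case True
  interpret Q: prob_space QQ by (rule prob_QQ)
  define Psi where "Psi = (\<lambda>\<omega>. liminf (\<lambda>K. ennreal (psi K w0 0 \<omega>)))"
  have Pm[measurable]: "Psi \<in> borel_measurable QQ" unfolding Psi_def by measurable
  have "(\<integral>\<^sup>+\<omega>. Psi \<omega> \<partial>QQ) \<le> liminf (\<lambda>K. \<integral>\<^sup>+\<omega>. ennreal (psi K w0 0 \<omega>) \<partial>QQ)"
    unfolding Psi_def by (rule nn_integral_liminf) measurable
  also have "\<dots> \<le> 1" by (rule Liminf_le) (simp_all add: psi_int)
  finally have intP: "(\<integral>\<^sup>+\<omega>. Psi \<omega> \<partial>QQ) \<le> 1" .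
  define A where "A = {\<omega>\<in>space QQ. 1 \<le> ennreal (1 / c0) * Psi \<omega>}"
  have "emeasure QQ A \<le> ennreal (1 / c0) * (\<integral>\<^sup>+\<omega>. Psi \<omega> * indicator (space QQ) \<omega> \<partial>QQ)"
    unfolding A_def by (rule nn_integral_Markov_inequality) auto
  also have "(\<integral>\<^sup>+\<omega>. Psi \<omega> * indicator (space QQ) \<omega> \<partial>QQ) = (\<integral>\<^sup>+\<omega>. Psi \<omega> \<partial>QQ)"
    by (rule nn_integral_cong) simp
  also have "ennreal (1 / c0) * (\<integral>\<^sup>+\<omega>. Psi \<omega> \<partial>QQ) \<le> ennreal (1 / c0)"
    using mult_left_mono[OF intP, of "ennreal (1 / c0)"] by simp
  finally have eA: "emeasure QQ A \<le> ennreal (1 / c0)" .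
  have Asets: "A \<in> sets QQ" unfolding A_def by measurable
  have sub: "Ev \<subseteq> A \<union> Bad"
  proof
    fix \<omega> assume \<omega>: "\<omega> \<in> Ev"
    show "\<omega> \<in> A \<union> Bad"
    proof (cases "\<omega> \<in> Bad")
      case False
      then obtain K where K: "\<forall>K'\<ge>K. psi K' w0 0 \<omega> = psi K w0 0 \<omega>" "c0 \<le> psi K w0 0 \<omega>"
        using ev[OF \<omega>] by blast
      have "ennreal c0 \<le> Psi \<omega>" unfolding Psi_def
      proof (rule Liminf_bounded)
        show "eventually (\<lambda>K'. ennreal c0 \<le> ennreal (psi K' w0 0 \<omega>)) sequentially"
          unfolding eventually_sequentially
        proof (intro exI[of _ K] allI impI)
          fix K' assume "K \<le> K'"
          hence e: "psi K' w0 0 \<omega> = psi K w0 0 \<omega>" using K(1) by blast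
          show "ennreal c0 \<le> ennreal (psi K' w0 0 \<omega>)" unfolding e using K(2) by (rule ennreal_leI)
        qed
      qed
      hence "ennreal (1 / c0) * ennreal c0 \<le> ennreal (1 / c0) * Psi \<omega>" by (rule mult_left_mono) simp
      moreover have "ennreal (1 / c0) * ennreal c0 = 1" using c0 by (simp add: ennreal_mult'[symmetric])
      ultimately show ?thesis unfolding A_def space_QQ by simp
    qed simp
  qed
  have "emeasure QQ Ev \<le> emeasure QQ (A \<union> Bad)" by (rule emeasure_mono[OF sub]) (use Asets Bad_sets in auto)
  also have "\<dots> \<le> emeasure QQ A + emeasure QQ Bad" by (rule emeasure_subadditive) (use Asets Bad_sets in auto)
  also have "\<dots> \<le> ennreal (1 / c0)" using eA Bad_null by simp
  finally have "emeasure QQ Ev \<le> ennreal (1 / c0)" .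
  thus ?thesis unfolding measure_def by (rule enn2real_leI[rotated]) (use c0 in simp)
qed

end

definition Gf :: "real \<Rightarrow> real \<Rightarrow> real \<Rightarrow> real \<Rightarrow> real \<Rightarrow> real \<Rightarrow> real" where
  "Gf L Rm Rp D1 D2 \<theta> = L * 2 * (if 0 \<le> \<theta> then Rm else Rp) * \<theta> / (1 + \<theta>) - \<theta> * (if 0 \<le> \<theta> then D1 else D2)"

lemma sq_opt:
  fixes s d :: real assumes "0 < s" "0 < d"
  shows "s\<^sup>2 * (s / d - 1) / (1 + (s / d - 1)) - (s / d - 1) * d\<^sup>2 = (s - d)\<^sup>2"
  using assms by (simp add: field_simps power2_eq_square)

lemma opt:
  fixes L Rm Rp D1 D2 \<epsilon> :: real
  assumes L: "L > 0" and Rp: "Rp > 0" and D1: "D1 \<ge> 0" and e: "\<epsilon> > 0"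
  shows "\<exists>\<theta>>-1. Gf L Rm Rp D1 D2 \<theta> \<ge>
     (if 2 * Rm * L > D1 then (sqrt (2 * Rm * L) - sqrt D1)\<^sup>2
      else if D2 > 2 * Rp * L then (sqrt (2 * Rp * L) - sqrt D2)\<^sup>2 else 0) - \<epsilon>"
proof (cases "2 * Rm * L > D1")
  case A: True
  define s where "s = sqrt (2 * Rm * L)"
  have lam: "2 * Rm * L > 0" using A D1 by linarith
  have s0: "s > 0" unfolding s_def using lam by simp
  have ss: "s\<^sup>2 = 2 * Rm * L" unfolding s_def using lam by simp
  show ?thesis
  proof (cases "D1 = 0")
    case True
    define \<theta> where "\<theta> = 2 * Rm * L / \<epsilon>"
    have th0: "\<theta> > 0" unfolding \<theta>_def using lam e by simp
    have "Gf L Rm Rp D1 D2 \<theta> = 2 * Rm * L - 2 * Rm * L / (1 + \<theta>)"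
      unfolding Gf_def using th0 True by (simp add: field_simps)
    moreover have "2 * Rm * L / (1 + \<theta>) \<le> \<epsilon>"
    proof -
      have "2 * Rm * L / (1 + \<theta>) = 2 * Rm * L * \<epsilon> / (\<epsilon> + 2 * Rm * L)"
        unfolding \<theta>_def using e lam by (simp add: field_simps)
      also have "\<dots> \<le> \<epsilon>" using e lam by (simp add: field_simps)
      finally show ?thesis .
    qed
    ultimately show ?thesis using A True th0 lam by (intro exI[of _ \<theta>]) auto
  next
    case False
    hence D1p: "D1 > 0" using D1 by simp
    define d where "d = sqrt D1"
    have d0: "d > 0" unfolding d_def using D1p by simp
    have dd: "d\<^sup>2 = D1" unfolding d_def using D1 by simp
    have sd: "d < s" unfolding s_def d_def using A by (simp add: real_sqrt_less_iff)
    define \<theta> where "\<theta> = s / d - 1"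
    have th0: "\<theta> > 0" unfolding \<theta>_def using sd d0 by (simp add: field_simps)
    have "Gf L Rm Rp D1 D2 \<theta> = s\<^sup>2 * \<theta> / (1 + \<theta>) - \<theta> * d\<^sup>2"
      unfolding Gf_def using th0 ss dd by (simp add: algebra_simps)
    also have "\<dots> = (s - d)\<^sup>2" unfolding \<theta>_def by (rule sq_opt[OF s0 d0])
    finally show ?thesis using A th0 e unfolding s_def d_def by (intro exI[of _ \<theta>]) auto
  qed
next
  case nA: False
  show ?thesis
  proof (cases "D2 > 2 * Rp * L")
    case B: True
    have lam: "2 * Rp * L > 0" using Rp L by simp
    define s where "s = sqrt (2 * Rp * L)"
    define d where "d = sqrt D2"
    have s0: "s > 0" unfolding s_def using lam by simp
    have ss: "s\<^sup>2 = 2 * Rp * L" unfolding s_def using lam by simp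
    have D2p: "D2 > 0" using B lam by linarith
    have d0: "d > 0" unfolding d_def using D2p by simp
    have dd: "d\<^sup>2 = D2" unfolding d_def using D2p by simp
    have sd: "s < d" unfolding s_def d_def using B by (simp add: real_sqrt_less_iff)
    define \<theta> where "\<theta> = s / d - 1"
    have th0: "\<theta> < 0" unfolding \<theta>_def using sd d0 by (simp add: field_simps)
    have th1: "\<theta> > -1" unfolding \<theta>_def using s0 d0 by simp
    have "Gf L Rm Rp D1 D2 \<theta> = s\<^sup>2 * \<theta> / (1 + \<theta>) - \<theta> * d\<^sup>2"
      unfolding Gf_def using th0 ss dd by (simp add: algebra_simps)
    also have "\<dots> = (s - d)\<^sup>2" unfolding \<theta>_def by (rule sq_opt[OF s0 d0])
    finally show ?thesis using nA B th1 e unfolding s_def d_def by (intro exI[of _ \<theta>]) auto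
  next
    case False
    show ?thesis using nA False e by (intro exI[of _ 0]) (simp add: Gf_def)
  qed
qed


lemma rate_sign:
  fixes Rm R0 Rp \<theta> :: real
  assumes "Rm \<le> R0" "R0 \<le> Rp" "\<theta> > -1"
  shows "2 * (if 0 \<le> \<theta> then Rm else Rp) * \<theta> / (1 + \<theta>) \<le> 2 * R0 * \<theta> / (1 + \<theta>)"
proof -
  have p: "1 + \<theta> > 0" using assms by simp
  show ?thesis
  proof (cases "0 \<le> \<theta>")
    case True
    hence "\<theta> / (1 + \<theta>) \<ge> 0" using p by simp
    hence "2 * Rm * (\<theta> / (1 + \<theta>)) \<le> 2 * R0 * (\<theta> / (1 + \<theta>))" using assms by (intro mult_right_mono) auto
    thus ?thesis using True by simp
  next
    case False
    hence "\<theta> / (1 + \<theta>) \<le> 0" using p by (simp add: divide_nonpos_pos)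
    hence "2 * Rp * (\<theta> / (1 + \<theta>)) \<le> 2 * R0 * (\<theta> / (1 + \<theta>))" using assms by (intro mult_right_mono_neg) auto
    thus ?thesis using False by simp
  qed
qed

lemma disp_sign:
  fixes D1 D2 \<Delta> \<theta> :: real
  assumes "\<Delta> \<le> D1" "D2 \<le> \<Delta>"
  shows "\<theta> * \<Delta> \<le> \<theta> * (if 0 \<le> \<theta> then D1 else D2)"
  using assms by (cases "0 \<le> \<theta>") (auto intro: mult_left_mono mult_left_mono_neg)

lemma RXY_bounds:
  assumes "nice w" "fst w \<le> B" "snd w \<le> B"
  shows "0 \<le> RX w" "RX w \<le> B + 1" "0 \<le> RY w" "RY w \<le> B + 1" "0 < RX w"
proof -
  have P: "0 < PP w" "PP w < 1" using nice_PP[OF assms(1)] by auto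
  have R1: "RR w \<ge> 1" using nice_RR[OF assms(1)] .
  have x: "0 \<le> fst w" "0 \<le> snd w" using assms(1) unfolding nice_def by auto
  have "(fst w + 1) / (snd w + 1) \<le> fst w + 1" using x by (simp add: divide_le_eq mult_le_cancel_left1 field_simps)
  moreover have "(snd w + 1) / (fst w + 1) \<le> snd w + 1" using x by (simp add: divide_le_eq field_simps)
  ultimately have RB: "RR w \<le> B + 1" unfolding RR_def using assms by auto
  show "0 \<le> RX w" "0 \<le> RY w" "0 < RX w" unfolding RX_def RY_def using P R1 by auto
  have "RR w * PP w \<le> RR w * 1" using P R1 by (intro mult_left_mono) auto
  thus "RX w \<le> B + 1" unfolding RX_def using RB by simp
  have "RR w * (1 - PP w) \<le> RR w * 1" using P R1 by (intro mult_left_mono) auto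
  thus "RY w \<le> B + 1" unfolding RY_def using RB by simp
qed

lemma EE_bounds:
  assumes "h \<in> GG M T" "T > 1" "s \<in> {0..1}" "M > 1"
  shows "0 \<le> h s" "h s \<le> 3 * M"
proof -
  have E: "h \<in> EE" using assms(1) unfolding GG_def by simp
  hence "mono_on {0..1} h" "h 0 = 0" unfolding EE_def by auto
  thus "0 \<le> h s" using assms(3) by (metis atLeastAtMost_iff mono_onD order.refl zero_le_one)
  have "T powr (-2/3) \<le> 1"
  proof -
    have "1 \<le> T powr (2/3)" using assms(2) by (intro ge_one_powr_ge_zero) auto
    thus ?thesis by (simp add: powr_minus_divide divide_le_eq)
  qed
  moreover have "h s \<le> M * (s + 2 * T powr (-2/3))" using assms(1,3) unfolding GG_def by auto
  moreover have "M * (s + 2 * T powr (-2/3)) \<le> M * 3"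
    using calculation(1) assms(3,4) by (intro mult_left_mono) auto
  ultimately show "h s \<le> 3 * M" by simp
qed

lemma Gf_alt: "Gf L Rm Rp D1 D2 \<theta> = L * (2 * (if 0 \<le> \<theta> then Rm else Rp) * \<theta> / (1 + \<theta>)) - \<theta> * (if 0 \<le> \<theta> then D1 else D2)"
  unfolding Gf_def by (simp add: mult.assoc)

lemma perj_alg:
  fixes T L qx qy th ph Dx Dy dx dy ea sa :: real
  assumes "T > 0" "th * dx \<le> th * Dx" "ph * dy \<le> ph * Dy" "L = ea - sa"
  shows "T * ((L * qx - th * Dx) + (L * qy - ph * Dy)) \<le> (qx + qy) * (T * ea - T * sa) - th * (T * dx) - ph * (T * dy)"
proof -
  have e: "(qx + qy) * (T * ea - T * sa) - th * (T * dx) - ph * (T * dy) - T * ((L * qx - th * Dx) + (L * qy - ph * Dy))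
     = T * (th * Dx - th * dx) + T * (ph * Dy - ph * dy)" unfolding assms(4) by (simp add: algebra_simps)
  have "0 \<le> T * (th * Dx - th * dx) + T * (ph * Dy - ph * dy)" using assms by (intro add_nonneg_nonneg mult_nonneg_nonneg) auto
  thus ?thesis using e by linarith
qed

lemma main_bound:
  fixes f :: path2 and n :: nat and T M a b :: real and z :: pt and th ph :: "int \<Rightarrow> real"
  assumes "fst f \<in> EE" and "snd f \<in> EE"
    and T1: "T > 1" and M1: "M > 1"
    and a0: "0 \<le> a" and ab: "a < b" and b1: "b \<le> 1"
    and nz: "mnorm (z - at2 f a) < 1 / (real n)^2"
    and thg: "\<And>j. j \<in> {\<lfloor>a * n\<rfloor>..\<lceil>b * n\<rceil> - 1} \<Longrightarrow> th j > -1"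
    and phg: "\<And>j. j \<in> {\<lfloor>a * n\<rfloor>..\<lceil>b * n\<rceil> - 1} \<Longrightarrow> ph j > -1"
  assumes F_def: "F = Lam M T f n"
  assumes J_def: "J = {\<lfloor>a * n\<rfloor>..\<lceil>b * n\<rceil> - 1}"
  assumes al_def: "al = (\<lambda>j::int. max (real_of_int j / real n) a)"
  assumes be_def: "be = (\<lambda>j::int. min ((real_of_int j + 1) / real n) b)"
  assumes I_def: "I = (\<lambda>j::int. {real_of_int j / real n .. (real_of_int j + 1) / real n} \<inter> {a..b})"
  shows "cond_prob T a b z F \<le> exp (- T * (\<Sum>j\<in>J.
      Gf (be j - al j) (RXm (I j) F T) (RXp (I j) F T) (xp (be j) F - xm (al j) F) (xm (be j) F - xp (al j) F) (th j)
    + Gf (be j - al j) (RYm (I j) F T) (RYp (I j) F T) (yp (be j) F - ym (al j) F) (ym (be j) F - yp (al j) F) (ph j)))"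
proof -
  have n0: "n > 0"
  proof (rule ccontr)
    assume "\<not> n > 0" hence "n = 0" by simp
    thus False using nz unfolding mnorm_def by simp
  qed
  have T0: "T > 0" using T1 by simp
  have Ij: "I j = {al j..be j}" for j unfolding I_def al_def be_def by (simp add: max.commute min.commute)
  have alj: "a \<le> al j" "al j < be j" "be j \<le> b" if "j \<in> J" for j
  proof -
    from that have j1: "\<lfloor>a * n\<rfloor> \<le> j" and j2: "j \<le> \<lceil>b * n\<rceil> - 1" unfolding J_def by auto
    have "a * n < real_of_int j + 1" using j1 by linarith
    hence h1: "a < (real_of_int j + 1) / real n" using n0 by (simp add: field_simps)
    have "real_of_int j < b * n" using j2 by linarith
    hence h2: "real_of_int j / real n < b" using n0 by (simp add: field_simps)
    have h3: "real_of_int j / real n < (real_of_int j + 1) / real n" using n0 by (simp add: divide_strict_right_mono)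
    show "a \<le> al j" "be j \<le> b" unfolding al_def be_def by auto
    show "al j < be j" unfolding al_def be_def using h1 h2 h3 ab by auto
  qed
  have disjb: "be i \<le> al j" if "i < j" for i j
  proof -
    have "real_of_int i + 1 \<le> real_of_int j" using that by linarith
    hence "(real_of_int i + 1) / real n \<le> real_of_int j / real n" using n0 by (simp add: divide_right_mono)
    thus ?thesis unfolding al_def be_def by linarith
  qed
  define sb where "sb = (\<lambda>j. T * (al j - a))"
  define eb where "eb = (\<lambda>j. T * (be j - a))"
  define H where "H = (b - a) * T"
  interpret B: blk J sb eb th ph H
  proof
    show "finite J" unfolding J_def by simp
    show "\<And>j. j \<in> J \<Longrightarrow> - 1 < th j" "\<And>j. j \<in> J \<Longrightarrow> - 1 < ph j" using thg phg unfolding J_def by auto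
    fix i j assume "i \<in> J" "j \<in> J" "i \<noteq> j"
    hence "i < j \<or> j < i" by auto
    thus "eb i \<le> sb j \<or> eb j \<le> sb i"
      using disjb[of i j] disjb[of j i] T0 unfolding sb_def eb_def by (auto intro: mult_left_mono)
  qed
  have gGG: "fst g \<in> GG M T" "snd g \<in> GG M T" if "g \<in> F" for g using that unfolding F_def Lam_def by auto
  have gb: "0 \<le> fst g s" "fst g s \<le> 3 * M" "0 \<le> snd g s" "snd g s \<le> 3 * M" if "g \<in> F" "s \<in> {0..1}" for g s
    using EE_bounds[OF gGG(1)[OF that(1)] T1 that(2) M1] EE_bounds[OF gGG(2)[OF that(1)] T1 that(2) M1] by auto
  have gmono: "mono_on {0..1} (fst g)" "mono_on {0..1} (snd g)" if "g \<in> F" for g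
    using gGG[OF that] unfolding GG_def EE_def by auto
  have Tg: "nice (T *\<^sub>R at2 g s)" "fst (T *\<^sub>R at2 g s) \<le> T * (3 * M)" "snd (T *\<^sub>R at2 g s) \<le> T * (3 * M)"
    if "g \<in> F" "s \<in> {0..1}" for g s
    using gb[OF that] T0 unfolding nice_def at2_def by (auto intro: mult_left_mono)
  have Isub: "I j \<subseteq> {0..1}" if "j \<in> J" for j using alj[OF that] a0 b1 unfolding Ij by auto
  have bddR: "bdd_below {RX (T *\<^sub>R at2 g s) | s g. s \<in> I j \<and> g \<in> F}" "bdd_above {RX (T *\<^sub>R at2 g s) | s g. s \<in> I j \<and> g \<in> F}"
     "bdd_below {RY (T *\<^sub>R at2 g s) | s g. s \<in> I j \<and> g \<in> F}" "bdd_above {RY (T *\<^sub>R at2 g s) | s g. s \<in> I j \<and> g \<in> F}"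
     if "j \<in> J" for j
  proof -
    have b: "0 \<le> RX (T *\<^sub>R at2 g s) \<and> RX (T *\<^sub>R at2 g s) \<le> T * (3 * M) + 1 \<and> 0 \<le> RY (T *\<^sub>R at2 g s) \<and> RY (T *\<^sub>R at2 g s) \<le> T * (3 * M) + 1"
      if "s \<in> I j" "g \<in> F" for s g
    proof -
      have s01: "s \<in> {0..1}" using Isub[OF \<open>j \<in> J\<close>] that(1) by auto
      show ?thesis using RXY_bounds[OF Tg(1)[OF that(2) s01] Tg(2)[OF that(2) s01] Tg(3)[OF that(2) s01]] by auto
    qed
    show "bdd_below {RX (T *\<^sub>R at2 g s) | s g. s \<in> I j \<and> g \<in> F}" by (rule bdd_belowI[of _ 0]) (use b in auto)
    show "bdd_above {RX (T *\<^sub>R at2 g s) | s g. s \<in> I j \<and> g \<in> F}" by (rule bdd_aboveI[of _ "T * (3 * M) + 1"]) (use b in auto)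
    show "bdd_below {RY (T *\<^sub>R at2 g s) | s g. s \<in> I j \<and> g \<in> F}" by (rule bdd_belowI[of _ 0]) (use b in auto)
    show "bdd_above {RY (T *\<^sub>R at2 g s) | s g. s \<in> I j \<and> g \<in> F}" by (rule bdd_aboveI[of _ "T * (3 * M) + 1"]) (use b in auto)
  qed
  have bddx: "bdd_below {fst g s | g. g \<in> F}" "bdd_above {fst g s | g. g \<in> F}"
    "bdd_below {snd g s | g. g \<in> F}" "bdd_above {snd g s | g. g \<in> F}" if "s \<in> {0..1}" for s
  proof -
    show "bdd_below {fst g s | g. g \<in> F}" by (rule bdd_belowI[of _ 0]) (use gb that in auto)
    show "bdd_above {fst g s | g. g \<in> F}" by (rule bdd_aboveI[of _ "3 * M"]) (use gb that in auto)
    show "bdd_below {snd g s | g. g \<in> F}" by (rule bdd_belowI[of _ 0]) (use gb that in auto)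
    show "bdd_above {snd g s | g. g \<in> F}" by (rule bdd_aboveI[of _ "3 * M"]) (use gb that in auto)
  qed
  have Rin: "RXm (I j) F T \<le> RX (T *\<^sub>R at2 g s)" "RX (T *\<^sub>R at2 g s) \<le> RXp (I j) F T"
     "RYm (I j) F T \<le> RY (T *\<^sub>R at2 g s)" "RY (T *\<^sub>R at2 g s) \<le> RYp (I j) F T"
    if "j \<in> J" "g \<in> F" "s \<in> I j" for j g s
  proof -
    have m1: "RX (T *\<^sub>R at2 g s) \<in> {RX (T *\<^sub>R at2 g s) | s g. s \<in> I j \<and> g \<in> F}" using that by blast
    have m2: "RY (T *\<^sub>R at2 g s) \<in> {RY (T *\<^sub>R at2 g s) | s g. s \<in> I j \<and> g \<in> F}" using that by blast
    show "RXm (I j) F T \<le> RX (T *\<^sub>R at2 g s)" unfolding RXm_def by (rule cInf_lower[OF m1 bddR(1)[OF that(1)]])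
    show "RX (T *\<^sub>R at2 g s) \<le> RXp (I j) F T" unfolding RXp_def by (rule cSup_upper[OF m1 bddR(2)[OF that(1)]])
    show "RYm (I j) F T \<le> RY (T *\<^sub>R at2 g s)" unfolding RYm_def by (rule cInf_lower[OF m2 bddR(3)[OF that(1)]])
    show "RY (T *\<^sub>R at2 g s) \<le> RYp (I j) F T" unfolding RYp_def by (rule cSup_upper[OF m2 bddR(4)[OF that(1)]])
  qed
  have xin: "xm s F \<le> fst g s" "fst g s \<le> xp s F" "ym s F \<le> snd g s" "snd g s \<le> yp s F"
    if "g \<in> F" "s \<in> {0..1}" for g s
  proof -
    have m1: "fst g s \<in> {fst g s | g. g \<in> F}" "snd g s \<in> {snd g s | g. g \<in> F}" using that by blast+
    show "xm s F \<le> fst g s" unfolding xm_def by (rule cInf_lower[OF m1(1) bddx(1)[OF that(2)]])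
    show "fst g s \<le> xp s F" unfolding xp_def by (rule cSup_upper[OF m1(1) bddx(2)[OF that(2)]])
    show "ym s F \<le> snd g s" unfolding ym_def by (rule cInf_lower[OF m1(2) bddx(3)[OF that(2)]])
    show "snd g s \<le> yp s F" unfolding yp_def by (rule cSup_upper[OF m1(2) bddx(4)[OF that(2)]])
  qed
  define lb where "lb = (\<lambda>j. 2 * (if 0 \<le> th j then RXm (I j) F T else RXp (I j) F T) * th j / (1 + th j)
     + 2 * (if 0 \<le> ph j then RYm (I j) F T else RYp (I j) F T) * ph j / (1 + ph j))"
  define S where "S = (\<Sum>j\<in>J.
      Gf (be j - al j) (RXm (I j) F T) (RXp (I j) F T) (xp (be j) F - xm (al j) F) (xm (be j) F - xp (al j) F) (th j)
    + Gf (be j - al j) (RYm (I j) F T) (RYp (I j) F T) (yp (be j) F - ym (al j) F) (ym (be j) F - yp (al j) F) (ph j))"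
  define Ev where "Ev = {\<omega> \<in> space QQ. \<exists>g\<in>F. \<forall>s\<in>{a..b}. (1 / T) *\<^sub>R xi (T *\<^sub>R z) \<omega> ((s - a) * T) = at2 g s}"
  have ev: "\<exists>K. (\<forall>K'\<ge>K. B.psi K' (T *\<^sub>R z) 0 \<omega> = B.psi K (T *\<^sub>R z) 0 \<omega>) \<and> exp (T * S) \<le> B.psi K (T *\<^sub>R z) 0 \<omega>"
    if \<omega>: "\<omega> \<in> Ev" "\<omega> \<notin> Bad" for \<omega>
  proof -
    from \<omega>(1) obtain g where g: "g \<in> F" "\<forall>s\<in>{a..b}. (1 / T) *\<^sub>R xi (T *\<^sub>R z) \<omega> ((s - a) * T) = at2 g s"
      unfolding Ev_def by blast
    define Y where "Y = (\<lambda>r. T *\<^sub>R at2 g (a + r / T))"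
    have Ys: "Y (T * (x - a)) = T *\<^sub>R at2 g x" for x unfolding Y_def using T0 by simp
    interpret D: det J sb eb th ph H "T *\<^sub>R z" \<omega> Y lb
    proof
      show "\<And>i. 0 < fst (\<omega> i)" "\<And>i. 0 < snd (snd (\<omega> i))" using \<omega>(2) unfolding Bad_def by auto
      show "0 \<le> H" unfolding H_def using ab T0 by simp
    next
      fix r assume r: "0 \<le> r" "r \<le> H"
      define s where "s = a + r / T"
      have "r / T \<le> b - a" using r T0 unfolding H_def by (simp add: divide_le_eq)
      hence s: "s \<in> {a..b}" unfolding s_def using r T0 by auto
      have "(s - a) * T = r" unfolding s_def using T0 by simp
      hence e: "(1 / T) *\<^sub>R xi (T *\<^sub>R z) \<omega> r = at2 g s" using g(2) s by metis
      have "xi (T *\<^sub>R z) \<omega> r = T *\<^sub>R ((1 / T) *\<^sub>R xi (T *\<^sub>R z) \<omega> r)" using T0 by simp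
      thus "xi (T *\<^sub>R z) \<omega> r = Y r" unfolding e Y_def s_def .
    next
      fix r r' assume r: "0 \<le> r" "r \<le> r'" "r' \<le> H"
      define s where "s = a + r / T"
      define s' where "s' = a + r' / T"
      have "r' / T \<le> b - a" using r T0 unfolding H_def by (simp add: divide_le_eq)
      moreover have "r / T \<le> r' / T" using r T0 by (simp add: divide_right_mono)
      moreover have "0 \<le> r / T" using r T0 by simp
      ultimately have ss: "s \<in> {0..1}" "s' \<in> {0..1}" "s \<le> s'" unfolding s_def s'_def using a0 b1 by auto
      have "fst g s \<le> fst g s'" "snd g s \<le> snd g s'" using gmono[OF g(1)] ss by (auto elim: mono_onD)
      thus "fst (Y r) \<le> fst (Y r') \<and> snd (Y r) \<le> snd (Y r')"
        unfolding Y_def s_def[symmetric] s'_def[symmetric] using T0 by (simp add: at2_def)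
    next
      fix r assume r: "0 \<le> r" "r \<le> H"
      have "r / T \<le> b - a" using r T0 unfolding H_def by (simp add: divide_le_eq)
      hence "a + r / T \<in> {0..1}" using r T0 a0 b1 by auto
      thus "nice (Y r)" unfolding Y_def by (rule Tg(1)[OF g(1)])
    next
      fix j assume j: "j \<in> J"
      show "0 \<le> sb j \<and> sb j \<le> eb j \<and> eb j \<le> H"
        using alj[OF j] T0 unfolding sb_def eb_def H_def by (auto intro: mult_left_mono simp: mult.commute)
    next
      fix j r assume j: "j \<in> J" and r: "sb j < r" "r < eb j"
      define s where "s = a + r / T"
      have "al j - a < r / T" "r / T < be j - a" using r T0 unfolding sb_def eb_def by (simp_all add: field_simps)
      hence sI: "s \<in> I j" unfolding Ij s_def by auto
      have Yr: "Y r = T *\<^sub>R at2 g s" unfolding Y_def s_def ..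
      have "2 * (if 0 \<le> th j then RXm (I j) F T else RXp (I j) F T) * th j / (1 + th j) \<le> 2 * RX (Y r) * th j / (1 + th j)"
        unfolding Yr by (rule rate_sign[OF Rin(1,2)[OF j g(1) sI] B.th_gt[OF j]])
      moreover have "2 * (if 0 \<le> ph j then RYm (I j) F T else RYp (I j) F T) * ph j / (1 + ph j) \<le> 2 * RY (Y r) * ph j / (1 + ph j)"
        unfolding Yr by (rule rate_sign[OF Rin(3,4)[OF j g(1) sI] B.ph_gt[OF j]])
      ultimately show "lb j \<le> B.cj j (Y r)" unfolding lb_def B.cj_def by linarith
    qed
    obtain K where K: "\<forall>K'\<ge>K. B.psi K' (T *\<^sub>R z) 0 \<omega> = B.psi K (T *\<^sub>R z) 0 \<omega>"
      "exp (\<Sum>j\<in>J. lb j * (eb j - sb j) - th j * (fst (Y (eb j)) - fst (Y (sb j))) - ph j * (snd (Y (eb j)) - snd (Y (sb j))))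
       \<le> B.psi K (T *\<^sub>R z) 0 \<omega>"
      using D.det_main by blast
    have pj: "T * (Gf (be j - al j) (RXm (I j) F T) (RXp (I j) F T) (xp (be j) F - xm (al j) F) (xm (be j) F - xp (al j) F) (th j)
    + Gf (be j - al j) (RYm (I j) F T) (RYp (I j) F T) (yp (be j) F - ym (al j) F) (ym (be j) F - yp (al j) F) (ph j))
     \<le> lb j * (eb j - sb j) - th j * (fst (Y (eb j)) - fst (Y (sb j))) - ph j * (snd (Y (eb j)) - snd (Y (sb j)))"
      if j: "j \<in> J" for j
    proof -
      define qx where "qx = 2 * (if 0 \<le> th j then RXm (I j) F T else RXp (I j) F T) * th j / (1 + th j)"
      define qy where "qy = 2 * (if 0 \<le> ph j then RYm (I j) F T else RYp (I j) F T) * ph j / (1 + ph j)"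
      define dx where "dx = fst g (be j) - fst g (al j)"
      define dy where "dy = snd g (be j) - snd g (al j)"
      define Dx where "Dx = (if 0 \<le> th j then xp (be j) F - xm (al j) F else xm (be j) F - xp (al j) F)"
      define Dy where "Dy = (if 0 \<le> ph j then yp (be j) F - ym (al j) F else ym (be j) F - yp (al j) F)"
      have a01: "al j \<in> {0..1}" "be j \<in> {0..1}" using alj[OF j] a0 b1 by auto
      have "th j * dx \<le> th j * Dx" unfolding Dx_def dx_def
        by (rule disp_sign) (use xin[OF g(1) a01(1)] xin[OF g(1) a01(2)] in auto)
      moreover have "ph j * dy \<le> ph j * Dy" unfolding Dy_def dy_def
        by (rule disp_sign) (use xin[OF g(1) a01(1)] xin[OF g(1) a01(2)] in auto)
      ultimately have "T * ((((be j - a) - (al j - a)) * qx - th j * Dx) + (((be j - a) - (al j - a)) * qy - ph j * Dy))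
          \<le> (qx + qy) * (T * (be j - a) - T * (al j - a)) - th j * (T * dx) - ph j * (T * dy)"
        by (intro perj_alg T0) auto
      moreover have "lb j * (eb j - sb j) - th j * (fst (Y (eb j)) - fst (Y (sb j))) - ph j * (snd (Y (eb j)) - snd (Y (sb j)))
          = (qx + qy) * (T * (be j - a) - T * (al j - a)) - th j * (T * dx) - ph j * (T * dy)"
        unfolding lb_def qx_def[symmetric] qy_def[symmetric] sb_def eb_def Ys dx_def dy_def
        by (simp add: at2_def right_diff_distrib)
      moreover have "Gf (be j - al j) (RXm (I j) F T) (RXp (I j) F T) (xp (be j) F - xm (al j) F) (xm (be j) F - xp (al j) F) (th j)
          = ((be j - a) - (al j - a)) * qx - th j * Dx" unfolding Gf_alt qx_def Dx_def by simp
      moreover have "Gf (be j - al j) (RYm (I j) F T) (RYp (I j) F T) (yp (be j) F - ym (al j) F) (ym (be j) F - yp (al j) F) (ph j)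
          = ((be j - a) - (al j - a)) * qy - ph j * Dy" unfolding Gf_alt qy_def Dy_def by simp
      ultimately show ?thesis by simp
    qed
    have "T * S \<le> (\<Sum>j\<in>J. lb j * (eb j - sb j) - th j * (fst (Y (eb j)) - fst (Y (sb j))) - ph j * (snd (Y (eb j)) - snd (Y (sb j))))"
      unfolding S_def sum_distrib_left by (rule sum_mono) (rule pj)
    hence "exp (T * S) \<le> B.psi K (T *\<^sub>R z) 0 \<omega>" using K(2) by (meson exp_le_cancel_iff order.trans)
    thus ?thesis using K(1) by blast
  qed
  have "measure QQ Ev \<le> 1 / exp (T * S)" by (rule B.prob_bound) (use ev in auto)
  moreover have "cond_prob T a b z F = measure QQ Ev" unfolding cond_prob_def Ev_def ..
  ultimately show ?thesis unfolding S_def by (simp add: exp_minus field_simps)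
qed


lemma aux_j:
  fixes f :: path2 and n :: nat and T M a b :: real and z :: pt
  assumes T1: "T > 1" and M1: "M > 1"
    and a0: "0 \<le> a" and ab: "a < b" and b1: "b \<le> 1"
    and n0: "n > 0"
  assumes F_def: "F = Lam M T f n"
  assumes J_def: "J = {\<lfloor>a * n\<rfloor>..\<lceil>b * n\<rceil> - 1}"
  assumes al_def: "al = (\<lambda>j::int. max (real_of_int j / real n) a)"
  assumes be_def: "be = (\<lambda>j::int. min ((real_of_int j + 1) / real n) b)"
  assumes I_def: "I = (\<lambda>j::int. {real_of_int j / real n .. (real_of_int j + 1) / real n} \<inter> {a..b})"
  assumes j: "j \<in> J" and Fne: "F \<noteq> {}"
  shows "al j < be j" "Sup (I j) = be j" "Inf (I j) = al j" "0 < RXp (I j) F T" "0 < RYp (I j) F T"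
    "0 \<le> xp (be j) F - xm (al j) F" "0 \<le> yp (be j) F - ym (al j) F"
proof -
  have T0: "T > 0" using T1 by simp
  have Ij: "I j = {al j..be j}" unfolding I_def al_def be_def by (simp add: max.commute min.commute)
  from j have j1: "\<lfloor>a * n\<rfloor> \<le> j" and j2: "j \<le> \<lceil>b * n\<rceil> - 1" unfolding J_def by auto
  have "a * n < real_of_int j + 1" using j1 by linarith
  hence h1: "a < (real_of_int j + 1) / real n" using n0 by (simp add: field_simps)
  have "real_of_int j < b * n" using j2 by linarith
  hence h2: "real_of_int j / real n < b" using n0 by (simp add: field_simps)
  have h3: "real_of_int j / real n < (real_of_int j + 1) / real n" using n0 by (simp add: divide_strict_right_mono)
  have alj: "a \<le> al j" "be j \<le> b" unfolding al_def be_def by auto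
  show lt: "al j < be j" unfolding al_def be_def using h1 h2 h3 ab by auto
  show "Sup (I j) = be j" "Inf (I j) = al j" unfolding Ij using lt by auto
  obtain g where g: "g \<in> F" using Fne by blast
  have gGG: "fst g \<in> GG M T" "snd g \<in> GG M T" using g unfolding F_def Lam_def by auto
  have gb: "0 \<le> fst g s" "fst g s \<le> 3 * M" "0 \<le> snd g s" "snd g s \<le> 3 * M" if "g \<in> F" "s \<in> {0..1}" for g s
  proof -
    have "fst g \<in> GG M T" "snd g \<in> GG M T" using that(1) unfolding F_def Lam_def by auto
    thus "0 \<le> fst g s" "fst g s \<le> 3 * M" "0 \<le> snd g s" "snd g s \<le> 3 * M"
      using EE_bounds[OF _ T1 that(2) M1] by auto
  qed
  have gmono: "mono_on {0..1} (fst g)" "mono_on {0..1} (snd g)" using gGG unfolding GG_def EE_def by auto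
  have Tg: "nice (T *\<^sub>R at2 g s)" "fst (T *\<^sub>R at2 g s) \<le> T * (3 * M)" "snd (T *\<^sub>R at2 g s) \<le> T * (3 * M)"
    if "g \<in> F" "s \<in> {0..1}" for g s
    using gb[OF that] T0 unfolding nice_def at2_def by (auto intro: mult_left_mono)
  have Isub: "I j \<subseteq> {0..1}" using alj a0 b1 unfolding Ij by auto
  have b: "RX (T *\<^sub>R at2 g s) \<le> T * (3 * M) + 1 \<and> RY (T *\<^sub>R at2 g s) \<le> T * (3 * M) + 1"
    if "s \<in> I j" "g \<in> F" for s g
  proof -
    have s01: "s \<in> {0..1}" using Isub that(1) by auto
    show ?thesis using RXY_bounds[OF Tg(1)[OF that(2) s01] Tg(2)[OF that(2) s01] Tg(3)[OF that(2) s01]] by auto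
  qed
  have bx: "bdd_above {RX (T *\<^sub>R at2 g s) | s g. s \<in> I j \<and> g \<in> F}" by (rule bdd_aboveI[of _ "T * (3 * M) + 1"]) (use b in auto)
  have by': "bdd_above {RY (T *\<^sub>R at2 g s) | s g. s \<in> I j \<and> g \<in> F}" by (rule bdd_aboveI[of _ "T * (3 * M) + 1"]) (use b in auto)
  have alI: "al j \<in> I j" unfolding Ij using lt by auto
  have a01: "al j \<in> {0..1}" "be j \<in> {0..1}" using alj lt a0 b1 by auto
  have m1: "RX (T *\<^sub>R at2 g (al j)) \<in> {RX (T *\<^sub>R at2 g s) | s g. s \<in> I j \<and> g \<in> F}" using alI g by blast
  have m2: "RY (T *\<^sub>R at2 g (al j)) \<in> {RY (T *\<^sub>R at2 g s) | s g. s \<in> I j \<and> g \<in> F}" using alI g by blast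
  have pos: "0 < RX (T *\<^sub>R at2 g (al j))" using RXY_bounds(5)[OF Tg[OF g a01(1)]] .
  have posY: "0 < RY (T *\<^sub>R at2 g (al j))"
  proof -
    have "nice (T *\<^sub>R at2 g (al j))" by (rule Tg(1)[OF g a01(1)])
    hence "0 < PP (T *\<^sub>R at2 g (al j))" "PP (T *\<^sub>R at2 g (al j)) < 1" "RR (T *\<^sub>R at2 g (al j)) \<ge> 1"
      using nice_PP nice_RR by auto
    thus ?thesis unfolding RY_def by simp
  qed
  show "0 < RXp (I j) F T" unfolding RXp_def using cSup_upper[OF m1 bx] pos by linarith
  show "0 < RYp (I j) F T" unfolding RYp_def using cSup_upper[OF m2 by'] posY by linarith
  have bddx: "bdd_below {fst g s | g. g \<in> F}" "bdd_above {fst g s | g. g \<in> F}"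
    "bdd_below {snd g s | g. g \<in> F}" "bdd_above {snd g s | g. g \<in> F}" if "s \<in> {0..1}" for s
  proof -
    show "bdd_below {fst g s | g. g \<in> F}" by (rule bdd_belowI[of _ 0]) (use gb that in auto)
    show "bdd_above {fst g s | g. g \<in> F}" by (rule bdd_aboveI[of _ "3 * M"]) (use gb that in auto)
    show "bdd_below {snd g s | g. g \<in> F}" by (rule bdd_belowI[of _ 0]) (use gb that in auto)
    show "bdd_above {snd g s | g. g \<in> F}" by (rule bdd_aboveI[of _ "3 * M"]) (use gb that in auto)
  qed
  have mx: "fst g s \<in> {fst g s | g. g \<in> F}" "snd g s \<in> {snd g s | g. g \<in> F}" for s using g by blast+
  have "xm (al j) F \<le> fst g (al j)" unfolding xm_def by (rule cInf_lower[OF mx(1) bddx(1)[OF a01(1)]])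
  moreover have "fst g (be j) \<le> xp (be j) F" unfolding xp_def by (rule cSup_upper[OF mx(1) bddx(2)[OF a01(2)]])
  moreover have "fst g (al j) \<le> fst g (be j)" using gmono(1) a01 lt by (auto elim: mono_onD)
  ultimately show "0 \<le> xp (be j) F - xm (al j) F" by linarith
  have "ym (al j) F \<le> snd g (al j)" unfolding ym_def by (rule cInf_lower[OF mx(2) bddx(3)[OF a01(1)]])
  moreover have "snd g (be j) \<le> yp (be j) F" unfolding yp_def by (rule cSup_upper[OF mx(2) bddx(4)[OF a01(2)]])
  moreover have "snd g (al j) \<le> snd g (be j)" using gmono(2) a01 lt by (auto elim: mono_onD)
  ultimately show "0 \<le> yp (be j) F - ym (al j) F" by linarith
qed

theorem proposition3p11:
  fixes f :: path2 and n :: nat and T M a b :: real and z :: pt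
  assumes "fst f \<in> EE" and "snd f \<in> EE"
    and "T > 1" and "M > 1"
    and "0 \<le> a" and "a < b" and "b \<le> 1"
    and "mnorm (z - at2 f a) < 1 / (real n)^2"
  shows "cond_prob T a b z (Lam M T f n)
    \<le> exp (- T * (\<Sum>j\<in>{\<lfloor>a * n\<rfloor>..\<lceil>b * n\<rceil> - 1}.
          EXp ({real_of_int j / n .. (real_of_int j + 1) / n} \<inter> {a..b}) (Lam M T f n) T
        + EYp ({real_of_int j / n .. (real_of_int j + 1) / n} \<inter> {a..b}) (Lam M T f n) T))"
proof -
  note A = assms
  define F where "F = Lam M T f n"
  define J where "J = {\<lfloor>a * n\<rfloor>..\<lceil>b * n\<rceil> - 1}"
  define al where "al = (\<lambda>j::int. max (real_of_int j / real n) a)"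
  define be where "be = (\<lambda>j::int. min ((real_of_int j + 1) / real n) b)"
  define I where "I = (\<lambda>j::int. {real_of_int j / real n .. (real_of_int j + 1) / real n} \<inter> {a..b})"
  define E where "E = (\<Sum>j\<in>J. EXp (I j) F T + EYp (I j) F T)"
  have n0: "n > 0"
  proof (rule ccontr)
    assume "\<not> n > 0" hence "n = 0" by simp
    thus False using A(8) unfolding mnorm_def by simp
  qed
  have T0: "T > 0" using A(3) by simp
  have goal: "cond_prob T a b z F \<le> exp (- T * E)"
  proof (cases "F = {}")
    case True
    thus ?thesis unfolding cond_prob_def by simp
  next
    case False
    note aux = aux_j[OF A(3,4,5,6,7) n0 F_def J_def al_def be_def I_def _ False]
    have key: "cond_prob T a b z F \<le> exp (- T * E + T * (2 * real (card J) * \<epsilon>))" if e: "\<epsilon> > 0" for \<epsilon>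
    proof -
      have exX: "\<exists>\<theta>>-1. Gf (be j - al j) (RXm (I j) F T) (RXp (I j) F T) (xp (be j) F - xm (al j) F) (xm (be j) F - xp (al j) F) \<theta> \<ge> EXp (I j) F T - \<epsilon>"
        if j: "j \<in> J" for j
      proof -
        have L: "be j - al j > 0" using aux(1)[OF j] by simp
        have eq: "EXp (I j) F T = (if 2 * RXm (I j) F T * (be j - al j) > xp (be j) F - xm (al j) F
            then (sqrt (2 * RXm (I j) F T * (be j - al j)) - sqrt (xp (be j) F - xm (al j) F))\<^sup>2
            else if xm (be j) F - xp (al j) F > 2 * RXp (I j) F T * (be j - al j)
            then (sqrt (2 * RXp (I j) F T * (be j - al j)) - sqrt (xm (be j) F - xp (al j) F))\<^sup>2 else 0)"
          unfolding EXp_def Let_def aux(2,3)[OF j] ..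
        show ?thesis unfolding eq
          by (rule opt[OF L aux(4)[OF j] aux(6)[OF j] e, of "RXm (I j) F T" "xm (be j) F - xp (al j) F"])
      qed
      have exY: "\<exists>\<theta>>-1. Gf (be j - al j) (RYm (I j) F T) (RYp (I j) F T) (yp (be j) F - ym (al j) F) (ym (be j) F - yp (al j) F) \<theta> \<ge> EYp (I j) F T - \<epsilon>"
        if j: "j \<in> J" for j
      proof -
        have L: "be j - al j > 0" using aux(1)[OF j] by simp
        have eq: "EYp (I j) F T = (if 2 * RYm (I j) F T * (be j - al j) > yp (be j) F - ym (al j) F
            then (sqrt (2 * RYm (I j) F T * (be j - al j)) - sqrt (yp (be j) F - ym (al j) F))\<^sup>2
            else if ym (be j) F - yp (al j) F > 2 * RYp (I j) F T * (be j - al j)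
            then (sqrt (2 * RYp (I j) F T * (be j - al j)) - sqrt (ym (be j) F - yp (al j) F))\<^sup>2 else 0)"
          unfolding EYp_def Let_def aux(2,3)[OF j] ..
        show ?thesis unfolding eq
          by (rule opt[OF L aux(5)[OF j] aux(7)[OF j] e, of "RYm (I j) F T" "ym (be j) F - yp (al j) F"])
      qed
      obtain th where th: "\<And>j. j \<in> J \<Longrightarrow> th j > -1 \<and> Gf (be j - al j) (RXm (I j) F T) (RXp (I j) F T) (xp (be j) F - xm (al j) F) (xm (be j) F - xp (al j) F) (th j) \<ge> EXp (I j) F T - \<epsilon>"
      proof -
        have "\<forall>j\<in>J. \<exists>\<theta>. \<theta> > -1 \<and> Gf (be j - al j) (RXm (I j) F T) (RXp (I j) F T) (xp (be j) F - xm (al j) F) (xm (be j) F - xp (al j) F) \<theta> \<ge> EXp (I j) F T - \<epsilon>"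
          by (intro ballI exX)
        then obtain h where h: "\<forall>j\<in>J. h j > -1 \<and> Gf (be j - al j) (RXm (I j) F T) (RXp (I j) F T) (xp (be j) F - xm (al j) F) (xm (be j) F - xp (al j) F) (h j) \<ge> EXp (I j) F T - \<epsilon>"
          by (rule bchoice[THEN exE])
        show ?thesis by (rule that[of h]) (use h in blast)
      qed
      obtain ph where ph: "\<And>j. j \<in> J \<Longrightarrow> ph j > -1 \<and> Gf (be j - al j) (RYm (I j) F T) (RYp (I j) F T) (yp (be j) F - ym (al j) F) (ym (be j) F - yp (al j) F) (ph j) \<ge> EYp (I j) F T - \<epsilon>"
      proof -
        have "\<forall>j\<in>J. \<exists>\<theta>. \<theta> > -1 \<and> Gf (be j - al j) (RYm (I j) F T) (RYp (I j) F T) (yp (be j) F - ym (al j) F) (ym (be j) F - yp (al j) F) \<theta> \<ge> EYp (I j) F T - \<epsilon>"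
          by (intro ballI exY)
        then obtain h where h: "\<forall>j\<in>J. h j > -1 \<and> Gf (be j - al j) (RYm (I j) F T) (RYp (I j) F T) (yp (be j) F - ym (al j) F) (ym (be j) F - yp (al j) F) (h j) \<ge> EYp (I j) F T - \<epsilon>"
          by (rule bchoice[THEN exE])
        show ?thesis by (rule that[of h]) (use h in blast)
      qed
      have mb: "cond_prob T a b z F \<le> exp (- T * (\<Sum>j\<in>J.
          Gf (be j - al j) (RXm (I j) F T) (RXp (I j) F T) (xp (be j) F - xm (al j) F) (xm (be j) F - xp (al j) F) (th j)
        + Gf (be j - al j) (RYm (I j) F T) (RYp (I j) F T) (yp (be j) F - ym (al j) F) (ym (be j) F - yp (al j) F) (ph j)))"
      proof (rule main_bound[OF A _ _ F_def J_def al_def be_def I_def])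
        fix j assume "j \<in> {\<lfloor>a * real n\<rfloor>..\<lceil>b * real n\<rceil> - 1}"
        hence j: "j \<in> J" unfolding J_def .
        show "th j > -1" using th[OF j] by (rule conjunct1)
      next
        fix j assume "j \<in> {\<lfloor>a * real n\<rfloor>..\<lceil>b * real n\<rceil> - 1}"
        hence j: "j \<in> J" unfolding J_def .
        show "ph j > -1" using ph[OF j] by (rule conjunct1)
      qed
      have s1: "(\<Sum>j\<in>J. EXp (I j) F T + EYp (I j) F T - 2 * \<epsilon>) \<le> (\<Sum>j\<in>J.
          Gf (be j - al j) (RXm (I j) F T) (RXp (I j) F T) (xp (be j) F - xm (al j) F) (xm (be j) F - xp (al j) F) (th j)
        + Gf (be j - al j) (RYm (I j) F T) (RYp (I j) F T) (yp (be j) F - ym (al j) F) (ym (be j) F - yp (al j) F) (ph j))"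
        (is "_ \<le> ?G")
        by (rule sum_mono) (use th ph in fastforce)
      have s2: "(\<Sum>j\<in>J. EXp (I j) F T + EYp (I j) F T - 2 * \<epsilon>) = E - 2 * real (card J) * \<epsilon>"
        unfolding E_def sum_subtractf by simp
      have "T * (E - 2 * real (card J) * \<epsilon>) \<le> T * ?G"
        using s1 s2 T0 by (intro mult_left_mono) auto
      hence "- T * ?G \<le> - T * E + T * (2 * real (card J) * \<epsilon>)"
        by (simp add: right_diff_distrib)
      thus ?thesis using mb by (meson exp_le_cancel_iff order.trans)
    qed
    define c where "c = T * (2 * real (card J))"
    have c0: "c \<ge> 0" unfolding c_def using T0 by simp
    show ?thesis
    proof (rule ccontr)
      assume "\<not> ?thesis"
      hence gt: "exp (- T * E) < cond_prob T a b z F" by simp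
      define X where "X = exp (- T * E)"
      have X0: "X > 0" unfolding X_def by simp
      define p where "p = cond_prob T a b z F"
      have pX: "X < p" using gt unfolding X_def p_def .
      define \<epsilon> where "\<epsilon> = ln (p / X) / (c + 1)"
      have lnp: "ln (p / X) > 0" using pX X0 by simp
      have e0: "\<epsilon> > 0" unfolding \<epsilon>_def using lnp c0 by simp
      have "c * \<epsilon> < ln (p / X)"
      proof -
        have "c * \<epsilon> = ln (p / X) * (c / (c + 1))" unfolding \<epsilon>_def by simp
        also have "\<dots> < ln (p / X) * 1" using lnp c0 by (intro mult_strict_left_mono) auto
        finally show ?thesis by simp
      qed
      hence "exp (- T * E + c * \<epsilon>) < exp (- T * E + ln (p / X))" by simp
      also have "\<dots> = exp (- T * E) * exp (ln (p / X))" by (rule exp_add)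
      also have "exp (ln (p / X)) = p / X" using X0 pX by (intro exp_ln) simp
      also have "exp (- T * E) * (p / X) = p" using X0 unfolding X_def by simp
      finally have "exp (- T * E + c * \<epsilon>) < p" .
      moreover have "p \<le> exp (- T * E + c * \<epsilon>)" using key[OF e0] unfolding p_def c_def by (simp add: mult.assoc)
      ultimately show False by simp
    qed
  qed
  thus ?thesis unfolding E_def F_def J_def I_def by simp
qed


end
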